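(* Let $\mathcal K$ be a Fraïssé class in a language $L$. If $\mathcal K$ is Ramsey, then there exists a reasonable, forgetful ordered Fraïssé class $\mathcal K^*$ in the language $L\cup\{<\}$ whose $L$-reduct is $\mathcal K$.
   Context: For structures $A,B$, $B^A$ is the set of embeddings of $A$ into $B$ and $\binom{B}{A}$ the set of substructures of $B$ isomorphic to $A$. A Fraïssé class is a class of finite structures that is hereditary, has joint embedding and amalgamation, and contains arbitrarily large finite structures. $\mathcal K$ is Ramsey if for all $A,B\in\mathcal K$ and $k\ge2$ there is $C\in\mathcal K$ such that every $\chi:\binom{C}{A}\to\{0,\dots,k-1\}$ is constant on $\binom{B'}{A}$ for some $B'\in\binom{C}{B}$. An ordered class $\mathcal K^*$ of finite $L\cup\{<\}$-structures is one whose members have the form $(A,<^A)$ with $<^A$ a linear order on the $L$-structure $A$; such $<^A$ is $\mathcal K^*$-admissible, and $\{A:(A,<^A)\in\mathcal K^*\}$ is the $L$-reduct of $\mathcal K^*$. With $\mathcal K$ the $L$-reduct of $\mathcal K^*$: $\mathcal K^*$ is reasonable if for all $A,B\in\mathcal K$, $a\in B^A$ and $\mathcal K^*$-admissible $<^A$ on $A$ there is a $\mathcal K^*$-admissible $<^B$ on $B$ such that $a$ is an embedding $(A,<^A)\to(B,<^B)$; $\mathcal K^*$ is forgetful if for all $A,B\in\mathcal K$ with $A\cong B$ and all $\mathcal K^*$-admissible orders $<^A,<^B$ on $A,B$, we have $(A,<^A)\cong(B,<^B)$. *)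

theory Defs
  imports Main
begin

text \<open>Finite structures are taken with
universe a subset of nat (classes of finite structures are considered up to
isomorphism, so this loses nothing).\<close>

record ('r, 'f) struc =
  scarrier :: "nat set"
  srels :: "'r \<Rightarrow> nat list \<Rightarrow> bool"
  sfuns :: "'f \<Rightarrow> nat list \<Rightarrow> nat"

definition wf_struc :: "('r \<Rightarrow> nat) \<Rightarrow> ('f \<Rightarrow> nat) \<Rightarrow> ('r, 'f) struc \<Rightarrow> bool" where
  "wf_struc aR aF A \<longleftrightarrow>
     (\<forall>f xs. length xs = aF f \<and> set xs \<subseteq> scarrier A \<longrightarrow> sfuns A f xs \<in> scarrier A) \<and>
     (\<forall>R xs. srels A R xs \<longrightarrow> length xs = aR R \<and> set xs \<subseteq> scarrier A)"

definition embedding :: "('f \<Rightarrow> nat) \<Rightarrow> (nat \<Rightarrow> nat) \<Rightarrow> ('r, 'f) struc \<Rightarrow> ('r, 'f) struc \<Rightarrow> bool" where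
  "embedding aF h A B \<longleftrightarrow>
     inj_on h (scarrier A) \<and> h ` scarrier A \<subseteq> scarrier B \<and>
     (\<forall>R xs. set xs \<subseteq> scarrier A \<longrightarrow> (srels B R (map h xs) \<longleftrightarrow> srels A R xs)) \<and>
     (\<forall>f xs. length xs = aF f \<and> set xs \<subseteq> scarrier A \<longrightarrow> h (sfuns A f xs) = sfuns B f (map h xs))"

definition isomorphism :: "('f \<Rightarrow> nat) \<Rightarrow> (nat \<Rightarrow> nat) \<Rightarrow> ('r, 'f) struc \<Rightarrow> ('r, 'f) struc \<Rightarrow> bool" where
  "isomorphism aF h A B \<longleftrightarrow> embedding aF h A B \<and> h ` scarrier A = scarrier B"

definition isomorphic :: "('f \<Rightarrow> nat) \<Rightarrow> ('r, 'f) struc \<Rightarrow> ('r, 'f) struc \<Rightarrow> bool" where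
  "isomorphic aF A B \<longleftrightarrow> (\<exists>h. isomorphism aF h A B)"

text \<open>Substructures of C are determined by their (function-closed) underlying sets.\<close>

definition closed_in :: "('f \<Rightarrow> nat) \<Rightarrow> ('r, 'f) struc \<Rightarrow> nat set \<Rightarrow> bool" where
  "closed_in aF C S \<longleftrightarrow> S \<subseteq> scarrier C \<and>
     (\<forall>f xs. length xs = aF f \<and> set xs \<subseteq> S \<longrightarrow> sfuns C f xs \<in> S)"

definition induced :: "('r, 'f) struc \<Rightarrow> nat set \<Rightarrow> ('r, 'f) struc" where
  "induced C S = \<lparr>scarrier = S, srels = (\<lambda>R xs. srels C R xs \<and> set xs \<subseteq> S), sfuns = sfuns C\<rparr>"

definition binom :: "('f \<Rightarrow> nat) \<Rightarrow> ('r, 'f) struc \<Rightarrow> ('r, 'f) struc \<Rightarrow> nat set set" where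
  "binom aF C A = {S. closed_in aF C S \<and> isomorphic aF A (induced C S)}"

definition class_of_finite :: "('r \<Rightarrow> nat) \<Rightarrow> ('f \<Rightarrow> nat) \<Rightarrow> ('r, 'f) struc set \<Rightarrow> bool" where
  "class_of_finite aR aF K \<longleftrightarrow> (\<forall>A\<in>K. wf_struc aR aF A \<and> finite (scarrier A))"

definition hereditary :: "('r \<Rightarrow> nat) \<Rightarrow> ('f \<Rightarrow> nat) \<Rightarrow> ('r, 'f) struc set \<Rightarrow> bool" where
  "hereditary aR aF K \<longleftrightarrow>
     (\<forall>A\<in>K. \<forall>B h. wf_struc aR aF B \<and> finite (scarrier B) \<and> embedding aF h B A \<longrightarrow> B \<in> K)"

definition joint_embedding :: "('f \<Rightarrow> nat) \<Rightarrow> ('r, 'f) struc set \<Rightarrow> bool" where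
  "joint_embedding aF K \<longleftrightarrow>
     (\<forall>A\<in>K. \<forall>B\<in>K. \<exists>C\<in>K. (\<exists>f. embedding aF f A C) \<and> (\<exists>g. embedding aF g B C))"

definition amalgamation :: "('f \<Rightarrow> nat) \<Rightarrow> ('r, 'f) struc set \<Rightarrow> bool" where
  "amalgamation aF K \<longleftrightarrow>
     (\<forall>A\<in>K. \<forall>B\<in>K. \<forall>C\<in>K. \<forall>f g. embedding aF f A B \<and> embedding aF g A C \<longrightarrow>
        (\<exists>D\<in>K. \<exists>f' g'. embedding aF f' B D \<and> embedding aF g' C D \<and>
            (\<forall>x\<in>scarrier A. f' (f x) = g' (g x))))"

definition arbitrarily_large :: "('r, 'f) struc set \<Rightarrow> bool" where
  "arbitrarily_large K \<longleftrightarrow> (\<forall>n::nat. \<exists>A\<in>K. n \<le> card (scarrier A))"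

definition fraisse_class :: "('r \<Rightarrow> nat) \<Rightarrow> ('f \<Rightarrow> nat) \<Rightarrow> ('r, 'f) struc set \<Rightarrow> bool" where
  "fraisse_class aR aF K \<longleftrightarrow> class_of_finite aR aF K \<and> hereditary aR aF K \<and>
     joint_embedding aF K \<and> amalgamation aF K \<and> arbitrarily_large K"

definition ramsey_class :: "('f \<Rightarrow> nat) \<Rightarrow> ('r, 'f) struc set \<Rightarrow> bool" where
  "ramsey_class aF K \<longleftrightarrow>
     (\<forall>A\<in>K. \<forall>B\<in>K. \<forall>k::nat. k \<ge> 2 \<longrightarrow>
        (\<exists>C\<in>K. \<forall>\<chi>::nat set \<Rightarrow> nat. \<chi> ` binom aF C A \<subseteq> {..<k} \<longrightarrow>
           (\<exists>B'\<in>binom aF C B. \<exists>c. \<forall>S\<in>binom aF (induced C B') A. \<chi> S = c)))"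

text \<open>The language L \<union> {<}: the new relation symbol is None (binary), old ones are Some R.\<close>

definition ord_arity :: "('r \<Rightarrow> nat) \<Rightarrow> 'r option \<Rightarrow> nat" where
  "ord_arity aR = (\<lambda>R. case R of None \<Rightarrow> 2 | Some R' \<Rightarrow> aR R')"

definition reduct :: "('r option, 'f) struc \<Rightarrow> ('r, 'f) struc" where
  "reduct B = \<lparr>scarrier = scarrier B, srels = (\<lambda>R. srels B (Some R)), sfuns = sfuns B\<rparr>"

definition with_order :: "('r, 'f) struc \<Rightarrow> (nat \<Rightarrow> nat \<Rightarrow> bool) \<Rightarrow> ('r option, 'f) struc" where
  "with_order A lt = \<lparr>scarrier = scarrier A,
     srels = (\<lambda>R xs. case R of
                None \<Rightarrow> (\<exists>x y. xs = [x, y] \<and> x \<in> scarrier A \<and> y \<in> scarrier A \<and> lt x y)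
              | Some R' \<Rightarrow> srels A R' xs),
     sfuns = sfuns A\<rparr>"

definition strict_linear_order_on :: "nat set \<Rightarrow> (nat \<Rightarrow> nat \<Rightarrow> bool) \<Rightarrow> bool" where
  "strict_linear_order_on X lt \<longleftrightarrow>
     (\<forall>x\<in>X. \<not> lt x x) \<and>
     (\<forall>x\<in>X. \<forall>y\<in>X. \<forall>z\<in>X. lt x y \<and> lt y z \<longrightarrow> lt x z) \<and>
     (\<forall>x\<in>X. \<forall>y\<in>X. x \<noteq> y \<longrightarrow> lt x y \<or> lt y x)"

definition ordered_class :: "('r option, 'f) struc set \<Rightarrow> bool" where
  "ordered_class Ks \<longleftrightarrow>
     (\<forall>B\<in>Ks. strict_linear_order_on (scarrier B) (\<lambda>x y. srels B None [x, y]))"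

definition admissible :: "('r option, 'f) struc set \<Rightarrow> ('r, 'f) struc \<Rightarrow> (nat \<Rightarrow> nat \<Rightarrow> bool) \<Rightarrow> bool" where
  "admissible Ks A lt \<longleftrightarrow> with_order A lt \<in> Ks"

definition reasonable :: "('f \<Rightarrow> nat) \<Rightarrow> ('r option, 'f) struc set \<Rightarrow> bool" where
  "reasonable aF Ks \<longleftrightarrow>
     (\<forall>A\<in>reduct ` Ks. \<forall>B\<in>reduct ` Ks. \<forall>a ltA. embedding aF a A B \<and> admissible Ks A ltA \<longrightarrow>
        (\<exists>ltB. admissible Ks B ltB \<and> embedding aF a (with_order A ltA) (with_order B ltB)))"

definition forgetful :: "('f \<Rightarrow> nat) \<Rightarrow> ('r option, 'f) struc set \<Rightarrow> bool" where
  "forgetful aF Ks \<longleftrightarrow>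
     (\<forall>A\<in>reduct ` Ks. \<forall>B\<in>reduct ` Ks. \<forall>ltA ltB.
        isomorphic aF A B \<and> admissible Ks A ltA \<and> admissible Ks B ltB \<longrightarrow>
        isomorphic aF (with_order A ltA) (with_order B ltB))"

end

theory Submission
  imports Defs
begin

definition fcl :: "('f \<Rightarrow> nat) \<Rightarrow> ('r, 'f) struc \<Rightarrow> bool" where
  "fcl aF A \<longleftrightarrow> (\<forall>f xs. length xs = aF f \<and> set xs \<subseteq> scarrier A \<longrightarrow> sfuns A f xs \<in> scarrier A)"

lemma wf_fcl: "wf_struc aR aF A \<Longrightarrow> fcl aF A"
  by (simp add: wf_struc_def fcl_def)

lemma fcl_wo[simp]: "fcl aF (with_order A l) = fcl aF A"
  by (simp add: fcl_def with_order_def)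

lemma fcl_induced: "closed_in aF A S \<Longrightarrow> fcl aF (induced A S)"
  by (simp add: fcl_def closed_in_def induced_def)

lemma wo_simps[simp]: "scarrier (with_order A l) = scarrier A" "sfuns (with_order A l) = sfuns A"
  "srels (with_order A l) (Some R) = srels A R"
  "srels (with_order A l) None [x,y] = (x \<in> scarrier A \<and> y \<in> scarrier A \<and> l x y)"
  by (auto simp: with_order_def)

lemma ind_simps[simp]: "scarrier (induced A S) = S" "sfuns (induced A S) = sfuns A"
  by (auto simp: induced_def)

lemma srels_induced: "srels (induced A S) R xs = (srels A R xs \<and> set xs \<subseteq> S)"
  by (simp add: induced_def)

lemma embedding_comp:
  "embedding aF h A B \<Longrightarrow> embedding aF g B C \<Longrightarrow> embedding aF (g \<circ> h) A C"
  unfolding embedding_def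
proof (intro conjI allI impI)
  assume h: "inj_on h (scarrier A) \<and> h ` scarrier A \<subseteq> scarrier B \<and>
    (\<forall>R xs. set xs \<subseteq> scarrier A \<longrightarrow> srels B R (map h xs) = srels A R xs) \<and>
    (\<forall>f xs. length xs = aF f \<and> set xs \<subseteq> scarrier A \<longrightarrow> h (sfuns A f xs) = sfuns B f (map h xs))"
  and g: "inj_on g (scarrier B) \<and> g ` scarrier B \<subseteq> scarrier C \<and>
    (\<forall>R xs. set xs \<subseteq> scarrier B \<longrightarrow> srels C R (map g xs) = srels B R xs) \<and>
    (\<forall>f xs. length xs = aF f \<and> set xs \<subseteq> scarrier B \<longrightarrow> g (sfuns B f xs) = sfuns C f (map g xs))"
  show "inj_on (g \<circ> h) (scarrier A)" using h g by (meson comp_inj_on inj_on_subset)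
  show "(g \<circ> h) ` scarrier A \<subseteq> scarrier C" using h g by auto
  fix R xs assume xs: "set xs \<subseteq> scarrier A"
  hence "set (map h xs) \<subseteq> scarrier B" using h by auto
  hence "srels C R (map g (map h xs)) = srels B R (map h xs)" using g by blast
  also have "\<dots> = srels A R xs" using h xs by blast
  finally show "srels C R (map (g \<circ> h) xs) = srels A R xs" by simp
next
  fix f xs
  assume h: "inj_on h (scarrier A) \<and> h ` scarrier A \<subseteq> scarrier B \<and>
    (\<forall>R xs. set xs \<subseteq> scarrier A \<longrightarrow> srels B R (map h xs) = srels A R xs) \<and>
    (\<forall>f xs. length xs = aF f \<and> set xs \<subseteq> scarrier A \<longrightarrow> h (sfuns A f xs) = sfuns B f (map h xs))"
  and g: "inj_on g (scarrier B) \<and> g ` scarrier B \<subseteq> scarrier C \<and>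
    (\<forall>R xs. set xs \<subseteq> scarrier B \<longrightarrow> srels C R (map g xs) = srels B R xs) \<and>
    (\<forall>f xs. length xs = aF f \<and> set xs \<subseteq> scarrier B \<longrightarrow> g (sfuns B f xs) = sfuns C f (map g xs))"
  and xs: "length xs = aF f \<and> set xs \<subseteq> scarrier A"
  hence "set (map h xs) \<subseteq> scarrier B" using h by (metis image_mono order_trans set_map)
  moreover have "h (sfuns A f xs) = sfuns B f (map h xs)" using h xs by blast
  moreover have "length (map h xs) = aF f" using xs by simp
  ultimately have "g (h (sfuns A f xs)) = sfuns C f (map g (map h xs))" using g by metis
  thus "(g \<circ> h) (sfuns A f xs) = sfuns C f (map (g \<circ> h) xs)" by simp
qed

lemma iso_comp:
  "isomorphism aF h A B \<Longrightarrow> isomorphism aF g B C \<Longrightarrow> isomorphism aF (g \<circ> h) A C"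
proof -
  assume a: "isomorphism aF h A B" "isomorphism aF g B C"
  have "embedding aF h A B" "embedding aF g B C" using a by (simp_all add: isomorphism_def)
  hence "embedding aF (g \<circ> h) A C" by (rule embedding_comp)
  moreover have "(g \<circ> h) ` scarrier A = g ` (h ` scarrier A)" by (simp only: image_comp)
  hence "(g \<circ> h) ` scarrier A = scarrier C" using a unfolding isomorphism_def by simp
  ultimately show ?thesis unfolding isomorphism_def by blast
qed

lemma embedding_cong:
  assumes e: "embedding aF h A B" and hg: "\<And>x. x \<in> scarrier A \<Longrightarrow> h x = g x"
    and fA: "fcl aF A"
  shows "embedding aF g A B"
proof -
  have m: "set xs \<subseteq> scarrier A \<Longrightarrow> map h xs = map g xs" for xs using hg by (induct xs) auto
  have i: "inj_on h (scarrier A)" and im: "h ` scarrier A \<subseteq> scarrier B"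
    and r: "\<And>R xs. set xs \<subseteq> scarrier A \<Longrightarrow> srels B R (map h xs) = srels A R xs"
    and f: "\<And>f xs. length xs = aF f \<Longrightarrow> set xs \<subseteq> scarrier A \<Longrightarrow> h (sfuns A f xs) = sfuns B f (map h xs)"
    using e unfolding embedding_def by auto
  show ?thesis unfolding embedding_def
  proof (intro conjI allI impI)
    show "inj_on g (scarrier A)" using i hg inj_on_cong by blast
    show "g ` scarrier A \<subseteq> scarrier B" using im hg by auto
    fix R xs assume "set xs \<subseteq> scarrier A" thus "srels B R (map g xs) = srels A R xs" using r m by metis
  next
    fix f xs assume a: "length xs = aF f \<and> set xs \<subseteq> scarrier A"
    have "h (sfuns A f xs) = sfuns B f (map g xs)" using f[of xs f] a m by simp
    moreover have "sfuns A f xs \<in> scarrier A" using fA a unfolding fcl_def by blast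
    ultimately show "g (sfuns A f xs) = sfuns B f (map g xs)" using hg by simp
  qed
qed

lemma iso_cong:
  assumes "isomorphism aF h A B" "\<And>x. x \<in> scarrier A \<Longrightarrow> h x = g x" "fcl aF A"
  shows "isomorphism aF g A B"
proof -
  have "g ` scarrier A = h ` scarrier A" by (rule image_cong) (simp_all add: assms(2))
  moreover have "embedding aF h A B" using assms(1) unfolding isomorphism_def by simp
  hence "embedding aF g A B" using embedding_cong[OF _ assms(2) assms(3)] by simp
  ultimately show ?thesis using assms(1) unfolding isomorphism_def by simp
qed

lemma embedding_id: "embedding aF id A A"
  by (simp add: embedding_def)

lemma iso_id: "isomorphism aF id A A"
  by (simp add: isomorphism_def embedding_id)

lemma iso_inv:
  assumes h: "isomorphism aF h A B" and fA: "fcl aF A"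
  shows "isomorphism aF (inv_into (scarrier A) h) B A"
proof -
  let ?g = "inv_into (scarrier A) h"
  have inj: "inj_on h (scarrier A)" and im: "h ` scarrier A = scarrier B"
    and rel: "\<And>R xs. set xs \<subseteq> scarrier A \<Longrightarrow> srels B R (map h xs) = srels A R xs"
    and fnn: "\<And>f xs. length xs = aF f \<Longrightarrow> set xs \<subseteq> scarrier A \<Longrightarrow> h (sfuns A f xs) = sfuns B f (map h xs)"
    using h unfolding isomorphism_def embedding_def by blast+
  have gin: "y \<in> scarrier B \<Longrightarrow> ?g y \<in> scarrier A" for y using im inv_into_into[of y h "scarrier A"] by simp
  have hg: "y \<in> scarrier B \<Longrightarrow> h (?g y) = y" for y using im f_inv_into_f[of y h "scarrier A"] by simp
  have gh: "x \<in> scarrier A \<Longrightarrow> ?g (h x) = x" for x using inj by simp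
  have mm: "set ys \<subseteq> scarrier B \<Longrightarrow> map h (map ?g ys) = ys" for ys using hg by (induct ys) auto
  have ms: "set ys \<subseteq> scarrier B \<Longrightarrow> set (map ?g ys) \<subseteq> scarrier A" for ys using gin by auto
  show ?thesis unfolding isomorphism_def embedding_def
  proof (intro conjI allI impI)
    show "inj_on ?g (scarrier B)" using im inj_on_inv_into[of "scarrier B" h "scarrier A"] by simp
    show "?g ` scarrier B \<subseteq> scarrier A" using gin by auto
    show "?g ` scarrier B = scarrier A" using inv_into_image_cancel[OF inj subset_refl] im by simp
    fix R ys assume ys: "set ys \<subseteq> scarrier B"
    have "srels B R (map h (map ?g ys)) = srels A R (map ?g ys)" using rel ms[OF ys] by blast
    thus "srels A R (map ?g ys) = srels B R ys" using mm[OF ys] by simp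
  next
    fix f ys assume a: "length ys = aF f \<and> set ys \<subseteq> scarrier B"
    have "h (sfuns A f (map ?g ys)) = sfuns B f (map h (map ?g ys))"
      by (rule fnn) (use a ms in auto)
    hence "sfuns B f ys = h (sfuns A f (map ?g ys))" using mm a by simp
    moreover have "sfuns A f (map ?g ys) \<in> scarrier A" using fA a ms unfolding fcl_def by simp
    ultimately show "?g (sfuns B f ys) = sfuns A f (map ?g ys)" using gh by simp
  qed
qed

lemma isomorphic_refl: "isomorphic aF A A"
  using iso_id isomorphic_def by blast

lemma isomorphic_sym: "isomorphic aF A B \<Longrightarrow> fcl aF A \<Longrightarrow> isomorphic aF B A"
  using iso_inv isomorphic_def by blast

lemma isomorphic_trans: "isomorphic aF A B \<Longrightarrow> isomorphic aF B C \<Longrightarrow> isomorphic aF A C"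
  unfolding isomorphic_def using iso_comp by blast

lemma emb_wo:
  "embedding aF h (with_order A l1) (with_order B l2) \<longleftrightarrow>
   embedding aF h A B \<and> (\<forall>x\<in>scarrier A. \<forall>y\<in>scarrier A. l2 (h x) (h y) = l1 x y)"
proof
  assume e: "embedding aF h (with_order A l1) (with_order B l2)"
  hence im: "h ` scarrier A \<subseteq> scarrier B" by (simp add: embedding_def)
  have "embedding aF h A B"
    using e unfolding embedding_def by (metis wo_simps)
  moreover have "\<forall>x\<in>scarrier A. \<forall>y\<in>scarrier A. l2 (h x) (h y) = l1 x y"
  proof (intro ballI)
    fix x y assume xy: "x \<in> scarrier A" "y \<in> scarrier A"
    have rel: "\<forall>R xs. set xs \<subseteq> scarrier A \<longrightarrow> srels (with_order B l2) R (map h xs) = srels (with_order A l1) R xs"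
      using e unfolding embedding_def by simp
    have "set [x,y] \<subseteq> scarrier A" using xy by simp
    with rel have "srels (with_order B l2) None (map h [x,y]) = srels (with_order A l1) None [x,y]" by blast
    hence "srels (with_order B l2) None [h x, h y] = srels (with_order A l1) None [x,y]" by simp
    thus "l2 (h x) (h y) = l1 x y" using xy im by (simp add: image_subset_iff)
  qed
  ultimately show "embedding aF h A B \<and> (\<forall>x\<in>scarrier A. \<forall>y\<in>scarrier A. l2 (h x) (h y) = l1 x y)" by blast
next
  assume a: "embedding aF h A B \<and> (\<forall>x\<in>scarrier A. \<forall>y\<in>scarrier A. l2 (h x) (h y) = l1 x y)"
  hence im: "h ` scarrier A \<subseteq> scarrier B" by (simp add: embedding_def)
  have relN: "srels (with_order B l2) None (map h xs) = srels (with_order A l1) None xs"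
    if "set xs \<subseteq> scarrier A" for xs
  proof -
    consider "xs = []" | x where "xs = [x]" | x y where "xs = [x,y]" | x y z zs where "xs = x#y#z#zs"
      by (metis list.exhaust)
    thus ?thesis
    proof cases
      case 1 thus ?thesis by (simp add: with_order_def)
    next
      case 2 thus ?thesis by (simp add: with_order_def)
    next
      case (3 x y) 
      hence "x \<in> scarrier A" "y \<in> scarrier A" using that by auto
      thus ?thesis using 3 a im by (simp add: image_subset_iff)
    next
      case 4 thus ?thesis by (simp add: with_order_def)
    qed
  qed
  show "embedding aF h (with_order A l1) (with_order B l2)"
    unfolding embedding_def
  proof (intro conjI allI impI)
    fix R xs assume xs: "set xs \<subseteq> scarrier (with_order A l1)"
    show "srels (with_order B l2) R (map h xs) = srels (with_order A l1) R xs"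
    proof (cases R)
      case None thus ?thesis using relN xs by simp
    next
      case (Some R')
      have "\<forall>R xs. set xs \<subseteq> scarrier A \<longrightarrow> srels B R (map h xs) = srels A R xs"
        using a unfolding embedding_def by blast
      hence "srels B R' (map h xs) = srels A R' xs" using xs by simp
      thus ?thesis using Some by simp
    qed
  next
    show "inj_on h (scarrier (with_order A l1))" using a by (simp add: embedding_def)
  next
    show "h ` scarrier (with_order A l1) \<subseteq> scarrier (with_order B l2)" using im by simp
  next
    fix f xs assume "length xs = aF f \<and> set xs \<subseteq> scarrier (with_order A l1)"
    thus "h (sfuns (with_order A l1) f xs) = sfuns (with_order B l2) f (map h xs)"
    proof -
      have "\<forall>f xs. length xs = aF f \<and> set xs \<subseteq> scarrier A \<longrightarrow> h (sfuns A f xs) = sfuns B f (map h xs)"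
        using a unfolding embedding_def by blast
      thus ?thesis using \<open>length xs = aF f \<and> set xs \<subseteq> scarrier (with_order A l1)\<close> by simp
    qed
  qed
qed

lemma iso_wo:
  "isomorphism aF h (with_order A l1) (with_order B l2) \<longleftrightarrow>
   isomorphism aF h A B \<and> (\<forall>x\<in>scarrier A. \<forall>y\<in>scarrier A. l2 (h x) (h y) = l1 x y)"
  unfolding isomorphism_def by (simp only: emb_wo wo_simps) blast

lemma ind_carrier: 
  assumes "wf_struc aR aF B" shows "induced B (scarrier B) = B"
proof (rule struc.equality)
  have "\<And>R xs. srels B R xs \<Longrightarrow> set xs \<subseteq> scarrier B" using assms unfolding wf_struc_def by blast
  thus "srels (induced B (scarrier B)) = srels B" by (auto simp: fun_eq_iff srels_induced)
qed (simp_all add: induced_def)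

lemma ind_ind: "S \<subseteq> T \<Longrightarrow> induced (induced C T) S = induced C S"
  unfolding induced_def by (auto simp: fun_eq_iff)

lemma closed_carrier: "fcl aF B \<Longrightarrow> closed_in aF B (scarrier B)"
  unfolding fcl_def closed_in_def by simp

lemma closed_induced: "T \<subseteq> scarrier C \<Longrightarrow> closed_in aF (induced C T) S \<longleftrightarrow> S \<subseteq> T \<and> closed_in aF C S"
  unfolding closed_in_def by auto

lemma emb_incl: "S \<subseteq> scarrier C \<Longrightarrow> embedding aF id (induced C S) C"
  unfolding embedding_def by (auto simp: srels_induced)

lemma emb_into_induced:
  assumes e: "embedding aF h X C" and s: "h ` scarrier X \<subseteq> S"
  shows "embedding aF h X (induced C S)"
proof -
  have i: "inj_on h (scarrier X)"
    and r: "\<And>R xs. set xs \<subseteq> scarrier X \<Longrightarrow> srels C R (map h xs) = srels X R xs"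
    and f: "\<And>f xs. length xs = aF f \<Longrightarrow> set xs \<subseteq> scarrier X \<Longrightarrow> h (sfuns X f xs) = sfuns C f (map h xs)"
    using e unfolding embedding_def by blast+
  show ?thesis unfolding embedding_def
  proof (intro conjI allI impI)
    show "inj_on h (scarrier X)" by (rule i)
    show "h ` scarrier X \<subseteq> scarrier (induced C S)" using s by simp
    fix R xs assume xs: "set xs \<subseteq> scarrier X"
    have "set (map h xs) \<subseteq> S" using xs s by auto
    thus "srels (induced C S) R (map h xs) = srels X R xs" using r[OF xs] by (simp add: srels_induced)
  next
    fix g xs assume "length xs = aF g \<and> set xs \<subseteq> scarrier X"
    thus "h (sfuns X g xs) = sfuns (induced C S) g (map h xs)" using f by simp
  qed
qed

lemma emb_restrict:
  assumes e: "embedding aF h X Y" and s: "S \<subseteq> scarrier X"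
  shows "embedding aF h (induced X S) Y"
proof -
  have "embedding aF (h \<circ> id) (induced X S) Y" by (rule embedding_comp[OF emb_incl[OF s] e])
  thus ?thesis by simp
qed

lemma img_closed:
  assumes e: "embedding aF h X Y" and c: "closed_in aF X S"
  shows "closed_in aF Y (h ` S)"
proof -
  have im: "h ` scarrier X \<subseteq> scarrier Y"
    and f: "\<And>f xs. length xs = aF f \<Longrightarrow> set xs \<subseteq> scarrier X \<Longrightarrow> h (sfuns X f xs) = sfuns Y f (map h xs)"
    using e unfolding embedding_def by blast+
  have SX: "S \<subseteq> scarrier X" and cS: "\<And>f xs. length xs = aF f \<Longrightarrow> set xs \<subseteq> S \<Longrightarrow> sfuns X f xs \<in> S"
    using c unfolding closed_in_def by blast+
  show ?thesis unfolding closed_in_def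
  proof (intro conjI allI impI)
    show "h ` S \<subseteq> scarrier Y" using SX im by auto
    fix g ys assume a: "length ys = aF g \<and> set ys \<subseteq> h ` S"
    define xs where "xs = map (inv_into S h) ys"
    have xs: "set xs \<subseteq> S" "ys = map h xs"
    proof -
      show "set xs \<subseteq> S" unfolding xs_def using a by (auto intro: inv_into_into)
      have "\<forall>y\<in>set ys. h (inv_into S h y) = y" using a by (auto intro: f_inv_into_f)
      thus "ys = map h xs" unfolding xs_def by (induct ys) auto
    qed
    have "sfuns Y g ys = h (sfuns X g xs)" using f[of xs g] xs a SX by auto
    moreover have "sfuns X g xs \<in> S" using cS[of xs g] xs a by simp
    ultimately show "sfuns Y g ys \<in> h ` S" by simp
  qed
qed

lemma img_iso:
  assumes e: "embedding aF h X Y" and SX: "S \<subseteq> scarrier X"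
  shows "isomorphism aF h (induced X S) (induced Y (h ` S))"
proof -
  have "embedding aF h (induced X S) Y" by (rule emb_restrict[OF e SX])
  hence "embedding aF h (induced X S) (induced Y (h ` S))" by (rule emb_into_induced) simp
  thus ?thesis unfolding isomorphism_def by simp
qed

lemma ind_wf: "wf_struc aR aF C \<Longrightarrow> closed_in aF C S \<Longrightarrow> wf_struc aR aF (induced C S)"
  unfolding wf_struc_def closed_in_def by (auto simp: srels_induced)

lemma wo_wf: "wf_struc aR aF A \<Longrightarrow> wf_struc (ord_arity aR) aF (with_order A l)"
  unfolding wf_struc_def by (auto simp: with_order_def ord_arity_def split: option.splits)

lemma reduct_wo[simp]: "reduct (with_order A l) = A"
  unfolding reduct_def with_order_def by simp

lemma binom_iff: "S \<in> binom aF C A \<longleftrightarrow> closed_in aF C S \<and> (\<exists>h. isomorphism aF h A (induced C S))"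
  unfolding binom_def isomorphic_def by simp

lemma in_K_ind:
  assumes K: "fraisse_class aR aF K" and C: "C \<in> K" and c: "closed_in aF C S"
  shows "induced C S \<in> K"
proof -
  have wfC: "wf_struc aR aF C" and fC: "finite (scarrier C)" using K C unfolding fraisse_class_def class_of_finite_def by auto
  have SC: "S \<subseteq> scarrier C" using c unfolding closed_in_def by blast
  have "wf_struc aR aF (induced C S)" by (rule ind_wf[OF wfC c])
  moreover have "finite (scarrier (induced C S))" using fC SC finite_subset by auto
  moreover have "embedding aF id (induced C S) C" by (rule emb_incl[OF SC])
  ultimately show ?thesis using K C unfolding fraisse_class_def hereditary_def by blast
qed

lemma fin_chain_sub:
  assumes "finite q" "q \<subseteq> \<Union>C" "C \<noteq> {}" "chain\<^sub>\<subseteq> C"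
  shows "\<exists>X\<in>C. q \<subseteq> X"
  using assms
proof (induction q rule: finite_induct)
  case empty thus ?case by blast
next
  case (insert x q)
  then obtain X where X: "X \<in> C" "q \<subseteq> X" by blast
  obtain Y where Y: "Y \<in> C" "x \<in> Y" using insert by blast
  have "X \<subseteq> Y \<or> Y \<subseteq> X" using insert(6) X Y unfolding chain_subset_def by blast
  thus ?case using X Y by blast
qed

definition goodP :: "('i \<Rightarrow> 'v set) \<Rightarrow> (('i \<Rightarrow> 'v) \<Rightarrow> bool) set \<Rightarrow> ('i \<times> 'v) set \<Rightarrow> bool" where
  "goodP F Cs P \<longleftrightarrow> (\<forall>q \<Gamma>. q \<subseteq> P \<and> finite q \<and> \<Gamma> \<subseteq> Cs \<and> finite \<Gamma> \<longrightarrow>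
     (\<exists>\<tau>. (\<forall>i. \<tau> i \<in> F i) \<and> (\<forall>p\<in>q. \<tau> (fst p) = snd p) \<and> (\<forall>c\<in>\<Gamma>. c \<tau>)))"

lemma compactness:
  fixes F :: "'i \<Rightarrow> 'v set" and Cs :: "(('i \<Rightarrow> 'v) \<Rightarrow> bool) set"
  assumes fin: "\<And>i. finite (F i)"
  and supp: "\<And>c. c \<in> Cs \<Longrightarrow> \<exists>s. finite s \<and> (\<forall>\<tau> \<tau>'. (\<forall>i\<in>s. \<tau> i = \<tau>' i) \<longrightarrow> c \<tau> = c \<tau>')"
  and sat: "\<And>\<Gamma>. \<Gamma> \<subseteq> Cs \<Longrightarrow> finite \<Gamma> \<Longrightarrow> \<exists>\<tau>. (\<forall>i. \<tau> i \<in> F i) \<and> (\<forall>c\<in>\<Gamma>. c \<tau>)"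
  shows "\<exists>\<tau>. (\<forall>i. \<tau> i \<in> F i) \<and> (\<forall>c\<in>Cs. c \<tau>)"
proof -
  let ?A = "{P. goodP F Cs P}"
  have "\<forall>C\<in>chains ?A. \<Union>C \<in> ?A"
  proof
    fix C assume C: "C \<in> chains ?A"
    show "\<Union>C \<in> ?A"
    proof (cases "C = {}")
      case True
      show ?thesis unfolding True goodP_def using sat by auto
    next
      case False
      show ?thesis unfolding goodP_def mem_Collect_eq
      proof (intro allI impI)
        fix q \<Gamma> assume a: "q \<subseteq> \<Union>C \<and> finite q \<and> \<Gamma> \<subseteq> Cs \<and> finite \<Gamma>"
        have ch: "chain\<^sub>\<subseteq> C" "C \<subseteq> ?A" using C unfolding chains_def by auto
        obtain X where X: "X \<in> C" "q \<subseteq> X" using fin_chain_sub[of q C] a False ch by blast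
        have "goodP F Cs X" using X ch by auto
        thus "\<exists>\<tau>. (\<forall>i. \<tau> i \<in> F i) \<and> (\<forall>p\<in>q. \<tau> (fst p) = snd p) \<and> (\<forall>c\<in>\<Gamma>. c \<tau>)"
          using a X unfolding goodP_def by blast
      qed
    qed
  qed
  then obtain M where M: "goodP F Cs M" and max: "\<And>X. goodP F Cs X \<Longrightarrow> M \<subseteq> X \<Longrightarrow> X = M"
    using Zorn_Lemma[of ?A] by blast
  have g: "\<And>q \<Gamma>. q \<subseteq> M \<Longrightarrow> finite q \<Longrightarrow> \<Gamma> \<subseteq> Cs \<Longrightarrow> finite \<Gamma> \<Longrightarrow>
     (\<exists>\<tau>. (\<forall>i. \<tau> i \<in> F i) \<and> (\<forall>p\<in>q. \<tau> (fst p) = snd p) \<and> (\<forall>c\<in>\<Gamma>. c \<tau>))"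
    using M unfolding goodP_def by blast
  have tot: "\<exists>v. (i, v) \<in> M" for i
  proof (rule ccontr)
    assume nv: "\<not> (\<exists>v. (i, v) \<in> M)"
    define P where "P = (\<lambda>v qG. fst qG \<subseteq> M \<and> finite (fst qG) \<and> snd qG \<subseteq> Cs \<and> finite (snd qG) \<and>
        \<not> (\<exists>\<tau>. (\<forall>i. \<tau> i \<in> F i) \<and> (\<forall>p\<in>insert (i,v) (fst qG). \<tau> (fst p) = snd p) \<and> (\<forall>c\<in>snd qG. c \<tau>)))"
    have "\<forall>v\<in>F i. \<exists>qG. P v qG"
    proof
      fix v assume "v \<in> F i"
      have "insert (i, v) M \<noteq> M" using nv by blast
      hence ng: "\<not> goodP F Cs (insert (i, v) M)" using max by blast
      then obtain q \<Gamma> where q: "q \<subseteq> insert (i,v) M" "finite q" "\<Gamma> \<subseteq> Cs" "finite \<Gamma>"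
        and no: "\<not> (\<exists>\<tau>. (\<forall>i. \<tau> i \<in> F i) \<and> (\<forall>p\<in>q. \<tau> (fst p) = snd p) \<and> (\<forall>c\<in>\<Gamma>. c \<tau>))"
        unfolding goodP_def by blast
      have sub: "q - {(i,v)} \<subseteq> M" using q by blast
      have no2: "\<not> (\<exists>\<tau>. (\<forall>i. \<tau> i \<in> F i) \<and> (\<forall>p\<in>insert (i,v) (q - {(i,v)}). \<tau> (fst p) = snd p) \<and> (\<forall>c\<in>\<Gamma>. c \<tau>))"
      proof
        assume "\<exists>\<tau>. (\<forall>i. \<tau> i \<in> F i) \<and> (\<forall>p\<in>insert (i,v) (q - {(i,v)}). \<tau> (fst p) = snd p) \<and> (\<forall>c\<in>\<Gamma>. c \<tau>)"
        then obtain \<tau> where t: "\<forall>i. \<tau> i \<in> F i" "\<forall>p\<in>insert (i,v) (q - {(i,v)}). \<tau> (fst p) = snd p" "\<forall>c\<in>\<Gamma>. c \<tau>"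
          by blast
        have "q \<subseteq> insert (i,v) (q - {(i,v)})" by blast
        hence "\<forall>p\<in>q. \<tau> (fst p) = snd p" using t(2) by blast
        thus False using no t(1,3) by blast
      qed
      show "\<exists>qG. P v qG" unfolding P_def using q sub no2
        by (intro exI[of _ "(q - {(i,v)}, \<Gamma>)"]) simp
    qed
    then obtain QG where QG: "\<forall>v\<in>F i. P v (QG v)" using bchoice by blast
    let ?q = "\<Union>v\<in>F i. fst (QG v)" and ?G = "\<Union>v\<in>F i. snd (QG v)"
    have "?q \<subseteq> M" "finite ?q" "?G \<subseteq> Cs" "finite ?G" using QG fin unfolding P_def by auto
    from g[OF this] obtain \<tau> where t: "\<forall>i. \<tau> i \<in> F i" "\<forall>p\<in>?q. \<tau> (fst p) = snd p" "\<forall>c\<in>?G. c \<tau>"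
      by blast
    let ?v = "\<tau> i"
    have v: "?v \<in> F i" using t by blast
    have "(\<forall>p\<in>insert (i,?v) (fst (QG ?v)). \<tau> (fst p) = snd p)" using t(2) v by auto
    moreover have "\<forall>c\<in>snd (QG ?v). c \<tau>" using t(3) v by auto
    ultimately show False using QG v t(1) unfolding P_def by blast
  qed
  hence "\<forall>i. \<exists>v. (i, v) \<in> M" by blast
  from choice[OF this] obtain \<tau> where tau: "\<forall>i. (i, \<tau> i) \<in> M" by blast
  show ?thesis
  proof (intro exI conjI ballI allI)
    fix i
    have "{(i,\<tau> i)} \<subseteq> M" "finite {(i,\<tau> i)}" "{} \<subseteq> Cs" "finite {}" using tau by auto
    from g[OF this] obtain \<sigma> where "\<forall>i. \<sigma> i \<in> F i" "\<forall>p\<in>{(i,\<tau> i)}. \<sigma> (fst p) = snd p"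
      by blast
    thus "\<tau> i \<in> F i" by (metis singletonI fst_conv snd_conv)
  next
    fix c assume c: "c \<in> Cs"
    obtain s where s: "finite s" "\<forall>\<tau> \<tau>'. (\<forall>i\<in>s. \<tau> i = \<tau>' i) \<longrightarrow> c \<tau> = c \<tau>'" using supp[OF c] by blast
    have "(\<lambda>i. (i, \<tau> i)) ` s \<subseteq> M" "finite ((\<lambda>i. (i, \<tau> i)) ` s)" "{c} \<subseteq> Cs" "finite {c}"
      using tau s c by auto
    from g[OF this] obtain \<sigma> where "\<forall>p\<in>(\<lambda>i. (i, \<tau> i)) ` s. \<sigma> (fst p) = snd p" "c \<sigma>"
      by blast
    hence e: "\<forall>i\<in>s. \<sigma> i = \<tau> i" and cs: "c \<sigma>" by auto
    have "c \<sigma> = c \<tau>" using s(2) e by blast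
    thus "c \<tau>" using cs by simp
  qed
qed

definition unifA :: "('f \<Rightarrow> nat) \<Rightarrow> ('r, 'f) struc \<Rightarrow> (nat \<Rightarrow> nat \<Rightarrow> bool) \<Rightarrow> ('r, 'f) struc \<Rightarrow> bool" where
  "unifA aF X l A \<longleftrightarrow> (\<forall>S S'. S \<in> binom aF X A \<and> S' \<in> binom aF X A \<longrightarrow>
      isomorphic aF (with_order (induced X S) l) (with_order (induced X S') l))"

lemma binom_img:
  assumes e: "embedding aF \<phi> X Y" and S: "S \<in> binom aF X A"
  shows "\<phi> ` S \<in> binom aF Y A"
proof -
  have c: "closed_in aF X S" and h: "\<exists>h. isomorphism aF h A (induced X S)" using S binom_iff by blast+
  have SX: "S \<subseteq> scarrier X" using c closed_in_def by blast
  have "closed_in aF Y (\<phi> ` S)" by (rule img_closed[OF e c])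
  moreover obtain h where "isomorphism aF h A (induced X S)" using h by blast
  hence "isomorphism aF (\<phi> \<circ> h) A (induced Y (\<phi> ` S))" using img_iso[OF e SX] iso_comp by blast
  ultimately show ?thesis using binom_iff by blast
qed

lemma order_img:
  assumes e: "embedding aF \<phi> X Y" and SX: "S \<subseteq> scarrier X"
  shows "isomorphic aF (with_order (induced X S) (\<lambda>x y. l (\<phi> x) (\<phi> y))) (with_order (induced Y (\<phi> ` S)) l)"
proof -
  have "isomorphism aF \<phi> (induced X S) (induced Y (\<phi> ` S))" by (rule img_iso[OF e SX])
  hence "isomorphism aF \<phi> (with_order (induced X S) (\<lambda>x y. l (\<phi> x) (\<phi> y))) (with_order (induced Y (\<phi> ` S)) l)"
    by (simp add: iso_wo)
  thus ?thesis unfolding isomorphic_def by blast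
qed

lemma iso_emb: "isomorphism aF h A B \<Longrightarrow> embedding aF h A B"
  by (simp add: isomorphism_def)

lemma color_exists:
  assumes fA: "finite (scarrier A)"
  shows "\<exists>\<chi>::nat set \<Rightarrow> nat. \<forall>S S'. S \<in> binom aF C A \<longrightarrow> S' \<in> binom aF C A \<longrightarrow> \<chi> S < card (Pow (scarrier A \<times> scarrier A)) \<and>
     (\<chi> S = \<chi> S' \<longrightarrow> (\<exists>P. isomorphic aF (with_order A P) (with_order (induced C S) l) \<and>
                             isomorphic aF (with_order A P) (with_order (induced C S') l)))"
proof -
  let ?M = "Pow (scarrier A \<times> scarrier A)"
  have "finite ?M" using fA by simp
  then obtain idx where idx: "bij_betw idx ?M {0..<card ?M}" using ex_bij_betw_finite_nat by blast
  define hS where "hS = (\<lambda>S. SOME h. isomorphism aF h A (induced C S))"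
  define P where "P = (\<lambda>S. {(x,y). x \<in> scarrier A \<and> y \<in> scarrier A \<and> l (hS S x) (hS S y)})"
  have PM: "P S \<in> ?M" for S unfolding P_def by auto
  have isoP: "isomorphic aF (with_order A (\<lambda>x y. (x,y) \<in> P S)) (with_order (induced C S) l)"
    if "S \<in> binom aF C A" for S
  proof -
    have "\<exists>h. isomorphism aF h A (induced C S)" using that binom_iff by blast
    hence "isomorphism aF (hS S) A (induced C S)" unfolding hS_def by (rule someI_ex)
    hence "isomorphism aF (hS S) (with_order A (\<lambda>x y. (x,y) \<in> P S)) (with_order (induced C S) l)"
      by (simp add: iso_wo P_def)
    thus ?thesis unfolding isomorphic_def by blast
  qed
  show ?thesis
  proof (intro exI[of _ "\<lambda>S. idx (P S)"] allI impI conjI)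
    fix S S' assume S: "S \<in> binom aF C A" and S': "S' \<in> binom aF C A"
    show "idx (P S) < card ?M" using idx PM[of S] unfolding bij_betw_def by auto
    assume "idx (P S) = idx (P S')"
    hence "P S = P S'" using idx PM unfolding bij_betw_def inj_on_def by blast
    thus "\<exists>Q. isomorphic aF (with_order A Q) (with_order (induced C S) l) \<and>
                             isomorphic aF (with_order A Q) (with_order (induced C S') l)"
      using isoP[OF S] isoP[OF S'] by metis
  qed
qed

lemma K_wf: "fraisse_class aR aF K \<Longrightarrow> X \<in> K \<Longrightarrow> wf_struc aR aF X"
  unfolding fraisse_class_def class_of_finite_def by blast

lemma K_fin: "fraisse_class aR aF K \<Longrightarrow> X \<in> K \<Longrightarrow> finite (scarrier X)"
  unfolding fraisse_class_def class_of_finite_def by blast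

lemma closed_sub: "closed_in aF C S \<Longrightarrow> S \<subseteq> scarrier C"
  unfolding closed_in_def by blast

lemma iterR:
  assumes K: "fraisse_class aR aF K" and R: "ramsey_class aF K"
  and fin: "finite \<A>"
  shows "\<A> \<subseteq> K \<Longrightarrow> B \<in> K \<Longrightarrow> \<exists>C\<in>K. \<forall>l. \<exists>B'\<in>binom aF C B. \<forall>A\<in>\<A>. unifA aF (induced C B') l A"
  using fin
proof (induction \<A> arbitrary: B rule: finite_induct)
  case empty
  have wB: "wf_struc aR aF B" using K_wf[OF K empty(2)] .
  have "scarrier B \<in> binom aF B B"
    unfolding binom_iff ind_carrier[OF wB] using closed_carrier[OF wf_fcl[OF wB]] iso_id by blast
  thus ?case using empty(2) by blast
next
  case (insert A \<A>)
  have AK: "A \<in> K" and AsK: "\<A> \<subseteq> K" using insert.prems(1) by auto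
  obtain C1 where C1: "C1 \<in> K" and H1: "\<And>l. \<exists>B1\<in>binom aF C1 B. \<forall>A'\<in>\<A>. unifA aF (induced C1 B1) l A'"
    using insert.IH[OF AsK insert(5)] by blast
  let ?k = "card (Pow (scarrier A \<times> scarrier A)) + 2"
  have RR: "\<forall>A\<in>K. \<forall>B\<in>K. \<forall>k::nat. k \<ge> 2 \<longrightarrow>
        (\<exists>C\<in>K. \<forall>\<chi>::nat set \<Rightarrow> nat. \<chi> ` binom aF C A \<subseteq> {..<k} \<longrightarrow>
           (\<exists>B'\<in>binom aF C B. \<exists>c. \<forall>S\<in>binom aF (induced C B') A. \<chi> S = c))"
    using R unfolding ramsey_class_def .
  have k2: "2 \<le> ?k" by simp
  from RR[rule_format, OF AK C1 k2] obtain C where C: "C \<in> K" and RC: "\<And>\<chi>::nat set \<Rightarrow> nat. \<chi> ` binom aF C A \<subseteq> {..<?k} \<Longrightarrow>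
           (\<exists>B'\<in>binom aF C C1. \<exists>c. \<forall>S\<in>binom aF (induced C B') A. \<chi> S = c)"
    by blast
  have wA: "wf_struc aR aF A" using K_wf[OF K AK] .
  have fA: "finite (scarrier A)" using K_fin[OF K AK] .
  show ?case
  proof (intro bexI[OF _ C] allI)
    fix l
    obtain \<chi> :: "nat set \<Rightarrow> nat" where chi: "\<And>S S'. S \<in> binom aF C A \<Longrightarrow> S' \<in> binom aF C A \<Longrightarrow>
       \<chi> S < card (Pow (scarrier A \<times> scarrier A)) \<and>
       (\<chi> S = \<chi> S' \<longrightarrow> (\<exists>P. isomorphic aF (with_order A P) (with_order (induced C S) l) \<and>
                             isomorphic aF (with_order A P) (with_order (induced C S') l)))"
      using color_exists[OF fA, of aF C l] by blast
    have "\<chi> ` binom aF C A \<subseteq> {..<?k}"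
    proof (rule image_subsetI)
      fix S assume S: "S \<in> binom aF C A"
      have "\<chi> S < card (Pow (scarrier A \<times> scarrier A))" using chi[OF S S] by (rule conjunct1)
      thus "\<chi> S \<in> {..<?k}" by simp
    qed
    hence "\<exists>B'\<in>binom aF C C1. \<exists>c. \<forall>S\<in>binom aF (induced C B') A. \<chi> S = c" by (rule RC)
    then obtain B'' where B'': "B'' \<in> binom aF C C1" and exc: "\<exists>c. \<forall>S\<in>binom aF (induced C B'') A. \<chi> S = c"
      by (rule bexE)
    from exc obtain c where mono0: "\<forall>S\<in>binom aF (induced C B'') A. \<chi> S = c" by (rule exE)
    have mono: "\<And>S. S \<in> binom aF (induced C B'') A \<Longrightarrow> \<chi> S = c" using mono0 by (rule bspec)
    have cB'': "closed_in aF C B''" using B'' binom_iff by blast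
    have B''C: "B'' \<subseteq> scarrier C" using closed_sub[OF cB''] .
    obtain g where g: "isomorphism aF g C1 (induced C B'')" using B'' binom_iff by blast
    have "embedding aF (id \<circ> g) C1 C" by (rule embedding_comp[OF iso_emb[OF g] emb_incl[OF B''C]])
    hence eg: "embedding aF g C1 C" by simp
    obtain B1 where B1: "B1 \<in> binom aF C1 B" and uni: "\<forall>A'\<in>\<A>. unifA aF (induced C1 B1) (\<lambda>x y. l (g x) (g y)) A'"
      using H1 by blast
    have cB1: "closed_in aF C1 B1" using B1 binom_iff by blast
    have B1C1: "B1 \<subseteq> scarrier C1" using closed_sub[OF cB1] .
    define B' where "B' = g ` B1"
    have B'bin: "B' \<in> binom aF C B" unfolding B'_def by (rule binom_img[OF eg B1])
    have B'C: "B' \<subseteq> scarrier C" using B'bin binom_iff closed_sub by metis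
    have B'B'': "B' \<subseteq> B''" unfolding B'_def using g B1C1 unfolding isomorphism_def by auto
    have "\<forall>A'\<in>insert A \<A>. unifA aF (induced C B') l A'"
    proof
      fix A' assume A': "A' \<in> insert A \<A>"
      show "unifA aF (induced C B') l A'"
      proof (cases "A' = A")
        case True
        show ?thesis unfolding unifA_def True
        proof (intro allI impI)
          fix S S' assume SS: "S \<in> binom aF (induced C B') A \<and> S' \<in> binom aF (induced C B') A"
          have tr: "T \<in> binom aF (induced C B'') A \<and> induced (induced C B') T = induced C T"
            if T: "T \<in> binom aF (induced C B') A" for T
          proof -
            have "closed_in aF (induced C B') T" using T binom_iff by blast
            hence TB': "T \<subseteq> B'" and cT: "closed_in aF C T" using closed_induced[OF B'C] by blast+
            have c2: "closed_in aF (induced C B'') T" using closed_induced[OF B''C] TB' B'B'' cT by blast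
            have e1: "induced (induced C B') T = induced C T" by (rule ind_ind[OF TB'])
            have e2: "induced (induced C B'') T = induced C T" using ind_ind TB' B'B'' by blast
            have "\<exists>h. isomorphism aF h A (induced (induced C B') T)" using T binom_iff by blast
            hence "\<exists>h. isomorphism aF h A (induced (induced C B'') T)" using e1 e2 by simp
            hence "T \<in> binom aF (induced C B'') A" using c2 binom_iff by blast
            thus ?thesis using e1 by blast
          qed
          have S2: "S \<in> binom aF (induced C B'') A" "induced (induced C B') S = induced C S" using tr SS by blast+
          have S2': "S' \<in> binom aF (induced C B'') A" "induced (induced C B') S' = induced C S'" using tr SS by blast+
          have bCS: "S \<in> binom aF C A" "S' \<in> binom aF C A"
          proof -
            have "closed_in aF (induced C B'') S" "closed_in aF (induced C B'') S'" using S2 S2' binom_iff by blast+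
            hence cc: "S \<subseteq> B'' \<and> closed_in aF C S" "S' \<subseteq> B'' \<and> closed_in aF C S'"
              using closed_induced[OF B''C] by simp_all
            hence cl: "closed_in aF C S" "closed_in aF C S'" by simp_all
            have "induced (induced C B'') S = induced C S" "induced (induced C B'') S' = induced C S'"
              using cc ind_ind by blast+
            moreover have "\<exists>h. isomorphism aF h A (induced (induced C B'') S)"
              "\<exists>h. isomorphism aF h A (induced (induced C B'') S')"
              using S2(1) S2'(1) binom_iff by blast+
            ultimately have "\<exists>h. isomorphism aF h A (induced C S)" "\<exists>h. isomorphism aF h A (induced C S')"
              by simp_all
            thus "S \<in> binom aF C A" "S' \<in> binom aF C A" using binom_iff cl by blast+
          qed
          have "\<chi> S = \<chi> S'" using mono S2(1) S2'(1) by simp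
          hence ex: "\<exists>P. isomorphic aF (with_order A P) (with_order (induced C S) l) \<and>
                             isomorphic aF (with_order A P) (with_order (induced C S') l)"
            using conjunct2[OF chi[OF bCS]] by (rule rev_mp)
          from ex obtain P where P: "isomorphic aF (with_order A P) (with_order (induced C S) l)"
             "isomorphic aF (with_order A P) (with_order (induced C S') l)"
            by blast
          have "isomorphic aF (with_order (induced C S) l) (with_order (induced C S') l)"
            using isomorphic_trans[OF isomorphic_sym[OF P(1)] P(2)] wf_fcl[OF wA] by simp
          thus "isomorphic aF (with_order (induced (induced C B') S) l) (with_order (induced (induced C B') S') l)"
            using S2(2) S2'(2) by simp
        qed
      next
        case False
        hence A'A: "A' \<in> \<A>" using A' by blast
        have gB: "isomorphism aF g (induced C1 B1) (induced C B')"
          unfolding B'_def by (rule img_iso[OF eg B1C1])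
        let ?\<psi> = "inv_into (scarrier (induced C1 B1)) g"
        have psi: "isomorphism aF ?\<psi> (induced C B') (induced C1 B1)"
          by (rule iso_inv[OF gB fcl_induced[OF cB1]])
        show ?thesis unfolding unifA_def
        proof (intro allI impI)
          fix S S' assume SS: "S \<in> binom aF (induced C B') A' \<and> S' \<in> binom aF (induced C B') A'"
          have tr: "isomorphic aF (with_order (induced (induced C B') T) l)
                    (with_order (induced (induced C1 B1) (?\<psi> ` T)) (\<lambda>x y. l (g x) (g y)))
               \<and> ?\<psi> ` T \<in> binom aF (induced C1 B1) A'"
            if T: "T \<in> binom aF (induced C B') A'" for T
          proof -
            have Tb: "?\<psi> ` T \<in> binom aF (induced C1 B1) A'" by (rule binom_img[OF iso_emb[OF psi] T])
            have cT: "closed_in aF (induced C1 B1) (?\<psi> ` T)" using Tb binom_iff by blast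
            have "closed_in aF (induced C B') T" using T binom_iff by blast
            hence TB': "T \<subseteq> B'" using closed_sub by fastforce
            have gpT: "g ` (?\<psi> ` T) = T"
              by (rule image_inv_into_cancel) (use TB' B'_def in auto)
            have "isomorphic aF (with_order (induced (induced C1 B1) (?\<psi> ` T)) (\<lambda>x y. l (g x) (g y)))
                    (with_order (induced (induced C B') (g ` (?\<psi> ` T))) l)"
              by (rule order_img[OF iso_emb[OF gB] closed_sub[OF cT]])
            hence X: "isomorphic aF (with_order (induced (induced C1 B1) (?\<psi> ` T)) (\<lambda>x y. l (g x) (g y)))
                    (with_order (induced (induced C B') T) l)" using gpT by simp
            have "isomorphic aF (with_order (induced (induced C B') T) l)
                    (with_order (induced (induced C1 B1) (?\<psi> ` T)) (\<lambda>x y. l (g x) (g y)))"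
              using isomorphic_sym[OF X] fcl_induced[OF cT] by simp
            thus ?thesis using Tb by blast
          qed
          have t1: "isomorphic aF (with_order (induced (induced C B') S) l)
                    (with_order (induced (induced C1 B1) (?\<psi> ` S)) (\<lambda>x y. l (g x) (g y)))"
               "?\<psi> ` S \<in> binom aF (induced C1 B1) A'" using tr SS by blast+
          have t2: "isomorphic aF (with_order (induced (induced C B') S') l)
                    (with_order (induced (induced C1 B1) (?\<psi> ` S')) (\<lambda>x y. l (g x) (g y)))"
               "?\<psi> ` S' \<in> binom aF (induced C1 B1) A'" using tr SS by blast+
          have mid: "isomorphic aF (with_order (induced (induced C1 B1) (?\<psi> ` S)) (\<lambda>x y. l (g x) (g y)))
                   (with_order (induced (induced C1 B1) (?\<psi> ` S')) (\<lambda>x y. l (g x) (g y)))"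
            using uni A'A t1(2) t2(2) unfolding unifA_def by blast
          have cS': "closed_in aF (induced C B') S'" using SS binom_iff by blast
          have "isomorphic aF (with_order (induced (induced C1 B1) (?\<psi> ` S')) (\<lambda>x y. l (g x) (g y)))
                  (with_order (induced (induced C B') S') l)"
            using isomorphic_sym[OF t2(1)] fcl_induced[OF cS'] by simp
          thus "isomorphic aF (with_order (induced (induced C B') S) l) (with_order (induced (induced C B') S') l)"
            using isomorphic_trans[OF isomorphic_trans[OF t1(1) mid]] by blast
        qed
      qed
    qed
    thus "\<exists>B'\<in>binom aF C B. \<forall>A\<in>insert A \<A>. unifA aF (induced C B') l A" using B'bin by blast
  qed
qed

definition unif :: "('f \<Rightarrow> nat) \<Rightarrow> ('r, 'f) struc \<Rightarrow> (nat \<Rightarrow> nat \<Rightarrow> bool) \<Rightarrow> bool" where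
  "unif aF D l \<longleftrightarrow> strict_linear_order_on (scarrier D) l \<and>
    (\<forall>S S'. closed_in aF D S \<and> closed_in aF D S' \<and> isomorphic aF (induced D S) (induced D S') \<longrightarrow>
       isomorphic aF (with_order (induced D S) l) (with_order (induced D S') l))"

lemma slo_pull:
  assumes "strict_linear_order_on Y l" "inj_on g X" "g ` X \<subseteq> Y"
  shows "strict_linear_order_on X (\<lambda>x y. l (g x) (g y))"
  using assms unfolding strict_linear_order_on_def inj_on_def by (smt (verit) image_subset_iff)

lemma slo_nat: "strict_linear_order_on X ((<) :: nat \<Rightarrow> nat \<Rightarrow> bool)"
  unfolding strict_linear_order_on_def by auto

lemma unif_exists:
  assumes K: "fraisse_class aR aF K" and R: "ramsey_class aF K" and B: "B \<in> K"
  shows "\<exists>l. unif aF B l"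
proof -
  let ?A = "induced B ` {S. closed_in aF B S}"
  have "{S. closed_in aF B S} \<subseteq> Pow (scarrier B)" unfolding closed_in_def by blast
  hence fA: "finite ?A" using K_fin[OF K B] finite_subset by blast
  have AK: "?A \<subseteq> K" using in_K_ind[OF K B] by blast
  obtain C where C: "C \<in> K" and H: "\<forall>l. \<exists>B'\<in>binom aF C B. \<forall>A\<in>?A. unifA aF (induced C B') l A"
    using iterR[OF K R fA AK B] by blast
  obtain B' where B': "B' \<in> binom aF C B" and uni: "\<forall>A\<in>?A. unifA aF (induced C B') ((<)::nat\<Rightarrow>nat\<Rightarrow>bool) A"
    using H by blast
  obtain g where g: "isomorphism aF g B (induced C B')" using B' binom_iff by blast
  have eg: "embedding aF g B (induced C B')" using iso_emb[OF g] .
  have wB: "wf_struc aR aF B" using K_wf[OF K B] .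
  have "strict_linear_order_on (scarrier B) (\<lambda>x y. g x < g y)"
    using slo_pull[OF slo_nat, of g "scarrier B"] eg unfolding embedding_def by blast
  moreover have "isomorphic aF (with_order (induced B S) (\<lambda>x y. g x < g y)) (with_order (induced B S') (\<lambda>x y. g x < g y))"
    if cS: "closed_in aF B S" and cS': "closed_in aF B S'" and i: "isomorphic aF (induced B S) (induced B S')" for S S'
  proof -
    have AA: "induced B S \<in> ?A" using cS by blast
    have "S \<in> binom aF B (induced B S)" using cS iso_id binom_iff by blast
    hence b1: "g ` S \<in> binom aF (induced C B') (induced B S)" by (rule binom_img[OF eg])
    have "S' \<in> binom aF B (induced B S)" using cS' i binom_iff unfolding isomorphic_def by blast
    hence b2: "g ` S' \<in> binom aF (induced C B') (induced B S)" by (rule binom_img[OF eg])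
    have mid: "isomorphic aF (with_order (induced (induced C B') (g ` S)) (<)) (with_order (induced (induced C B') (g ` S')) (<))"
      using uni AA b1 b2 unfolding unifA_def by blast
    have X1: "isomorphic aF (with_order (induced B S) (\<lambda>x y. g x < g y)) (with_order (induced (induced C B') (g ` S)) (<))"
      using order_img[OF eg closed_sub[OF cS], of "(<)"] by simp
    have X2: "isomorphic aF (with_order (induced B S') (\<lambda>x y. g x < g y)) (with_order (induced (induced C B') (g ` S')) (<))"
      using order_img[OF eg closed_sub[OF cS'], of "(<)"] by simp
    have X2': "isomorphic aF (with_order (induced (induced C B') (g ` S')) (<)) (with_order (induced B S') (\<lambda>x y. g x < g y))"
      using isomorphic_sym[OF X2] fcl_induced[OF cS'] by simp
    show ?thesis using isomorphic_trans[OF isomorphic_trans[OF X1 mid] X2'] .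
  qed
  ultimately show ?thesis unfolding unif_def by blast
qed

lemma wo_cong: "(\<And>x y. x \<in> scarrier X \<Longrightarrow> y \<in> scarrier X \<Longrightarrow> l1 x y = l2 x y) \<Longrightarrow> with_order X l1 = with_order X l2"
  unfolding with_order_def by (auto simp: fun_eq_iff split: option.splits)

lemma unif_pull:
  assumes u: "unif aF D ld" and wX: "wf_struc aR aF X" and e1: "embedding aF e1 X D" and e2: "embedding aF e2 X D"
  shows "isomorphic aF (with_order X (\<lambda>x y. ld (e1 x) (e1 y))) (with_order X (\<lambda>x y. ld (e2 x) (e2 y)))"
proof -
  have fX: "fcl aF X" using wf_fcl[OF wX] .
  have cX: "closed_in aF X (scarrier X)" using closed_carrier[OF fX] .
  have c1: "closed_in aF D (e1 ` scarrier X)" using img_closed[OF e1 cX] .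
  have c2: "closed_in aF D (e2 ` scarrier X)" using img_closed[OF e2 cX] .
  have i1: "isomorphism aF e1 X (induced D (e1 ` scarrier X))" using img_iso[OF e1 subset_refl] ind_carrier[OF wX] by simp
  have i2: "isomorphism aF e2 X (induced D (e2 ` scarrier X))" using img_iso[OF e2 subset_refl] ind_carrier[OF wX] by simp
  have "isomorphic aF (induced D (e1 ` scarrier X)) (induced D (e2 ` scarrier X))"
    using isomorphic_trans[OF isomorphic_sym[OF _ fX] ] i1 i2 unfolding isomorphic_def by blast
  hence mid: "isomorphic aF (with_order (induced D (e1 ` scarrier X)) ld) (with_order (induced D (e2 ` scarrier X)) ld)"
    using u c1 c2 unfolding unif_def by blast
  have X1: "isomorphic aF (with_order X (\<lambda>x y. ld (e1 x) (e1 y))) (with_order (induced D (e1 ` scarrier X)) ld)"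
    using order_img[OF e1 subset_refl, of ld] ind_carrier[OF wX] by simp
  have X2: "isomorphic aF (with_order X (\<lambda>x y. ld (e2 x) (e2 y))) (with_order (induced D (e2 ` scarrier X)) ld)"
    using order_img[OF e2 subset_refl, of ld] ind_carrier[OF wX] by simp
  have X2': "isomorphic aF (with_order (induced D (e2 ` scarrier X)) ld) (with_order X (\<lambda>x y. ld (e2 x) (e2 y)))"
    using isomorphic_sym[OF X2] fX by simp
  show ?thesis using isomorphic_trans[OF isomorphic_trans[OF X1 mid] X2'] .
qed

definition TW :: "(('r, 'f) struc \<Rightarrow> (nat \<times> nat) set) \<Rightarrow> ('r, 'f) struc \<Rightarrow> ('r option, 'f) struc" where
  "TW \<tau> X = with_order X (\<lambda>x y. (x, y) \<in> \<tau> X)"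

definition tord :: "('f \<Rightarrow> nat) \<Rightarrow> (('r, 'f) struc \<Rightarrow> (nat \<times> nat) set) \<Rightarrow> ('r, 'f) struc \<Rightarrow> (nat \<Rightarrow> nat \<Rightarrow> bool) \<Rightarrow> bool" where
  "tord aF \<tau> B l \<longleftrightarrow> strict_linear_order_on (scarrier B) l \<and>
     (\<forall>S. closed_in aF B S \<longrightarrow> isomorphic aF (with_order (induced B S) l) (TW \<tau> (induced B S)))"

definition tau_ok :: "('f \<Rightarrow> nat) \<Rightarrow> ('r, 'f) struc set \<Rightarrow> (('r, 'f) struc \<Rightarrow> (nat \<times> nat) set) \<Rightarrow> bool" where
  "tau_ok aF K \<tau> \<longleftrightarrow> (\<forall>B\<in>K. \<exists>l. tord aF \<tau> B l) \<and>
     (\<forall>X\<in>K. \<forall>Y\<in>K. isomorphic aF X Y \<longrightarrow> isomorphic aF (TW \<tau> X) (TW \<tau> Y))"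

lemma jep_fin:
  assumes K: "fraisse_class aR aF K" and fin: "finite M"
  shows "M \<subseteq> K \<Longrightarrow> \<exists>D\<in>K. \<forall>X\<in>M. \<exists>e. embedding aF e X D"
  using fin
proof (induction M rule: finite_induct)
  case empty
  have "\<exists>A\<in>K. 0 \<le> card (scarrier A)" using K unfolding fraisse_class_def arbitrarily_large_def by blast
  thus ?case by blast
next
  case (insert X M)
  obtain D where D: "D \<in> K" and H: "\<forall>Y\<in>M. \<exists>e. embedding aF e Y D" using insert by blast
  have XK: "X \<in> K" using insert.prems by blast
  have "joint_embedding aF K" using K unfolding fraisse_class_def by blast
  then obtain E where E: "E \<in> K" and f: "\<exists>f. embedding aF f D E" and g: "\<exists>g. embedding aF g X E"
    unfolding joint_embedding_def using D XK by blast
  obtain f where f: "embedding aF f D E" using f by blast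
  have "\<forall>Y\<in>insert X M. \<exists>e. embedding aF e Y E"
  proof
    fix Y assume "Y \<in> insert X M"
    thus "\<exists>e. embedding aF e Y E"
    proof
      assume "Y = X" thus ?thesis using g by blast
    next
      assume "Y \<in> M"
      then obtain e where "embedding aF e Y D" using H by blast
      thus ?thesis using embedding_comp[OF _ f] by blast
    qed
  qed
  thus ?case using E by blast
qed

datatype ('a) cidx = CI 'a | CP 'a 'a

fun cstrs :: "'a cidx \<Rightarrow> 'a set" where
  "cstrs (CI B) = {B}" | "cstrs (CP X Y) = {X, Y}"

fun con :: "('f \<Rightarrow> nat) \<Rightarrow> ('r, 'f) struc cidx \<Rightarrow> ((('r, 'f) struc \<Rightarrow> (nat \<times> nat) set) \<Rightarrow> bool)" where
  "con aF (CI B) = (\<lambda>\<tau>. \<exists>l. tord aF \<tau> B l)"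
| "con aF (CP X Y) = (\<lambda>\<tau>. isomorphic aF (TW \<tau> X) (TW \<tau> Y))"

lemma tau_exists:
  fixes K :: "('r, 'f) struc set" and aF :: "'f \<Rightarrow> nat" and aR :: "'r \<Rightarrow> nat"
  assumes K: "fraisse_class aR aF K" and R: "ramsey_class aF K"
  shows "\<exists>\<tau>. tau_ok aF K \<tau>"
proof -
  define F where "F = (\<lambda>X::('r,'f) struc. if X \<in> K then Pow (scarrier X \<times> scarrier X) else {{}})"
  define I where "I = CI ` K \<union> {CP X Y | X Y. X \<in> K \<and> Y \<in> K \<and> isomorphic aF X Y}"
  define Cs where "Cs = con aF ` I"
  have finF: "\<And>X. finite (F X)" unfolding F_def using K_fin[OF K] by auto
  have supp: "\<exists>s. finite s \<and> (\<forall>\<tau> \<tau>'. (\<forall>i\<in>s. \<tau> i = \<tau>' i) \<longrightarrow> c \<tau> = c \<tau>')" if c: "c \<in> Cs" for c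
  proof -
    obtain j where j: "j \<in> I" "c = con aF j" using c Cs_def by blast
    show ?thesis
    proof (cases j)
      case (CI B)
      hence BK: "B \<in> K" using j I_def by auto
      let ?s = "induced B ` Pow (scarrier B)"
      have "finite ?s" using K_fin[OF K BK] by simp
      moreover have "c \<tau> = c \<tau>'" if a: "\<forall>i\<in>?s. \<tau> i = \<tau>' i" for \<tau> \<tau>'
      proof -
        have "TW \<tau> (induced B S) = TW \<tau>' (induced B S)" if "closed_in aF B S" for S
          using a that closed_sub unfolding TW_def by fastforce
        hence "tord aF \<tau> B l = tord aF \<tau>' B l" for l unfolding tord_def by auto
        hence "tord aF \<tau> B = tord aF \<tau>' B" by (intro ext)
        thus ?thesis using j CI by simp
      qed
      ultimately show ?thesis by blast
    next
      case (CP X Y)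
      have "c \<tau> = c \<tau>'" if a: "\<forall>i\<in>{X,Y}. \<tau> i = \<tau>' i" for \<tau> \<tau>'
        using a j CP by (simp add: TW_def)
      thus ?thesis by blast
    qed
  qed
  have sat: "\<exists>\<tau>. (\<forall>i. \<tau> i \<in> F i) \<and> (\<forall>c\<in>\<Gamma>. c \<tau>)" if G: "\<Gamma> \<subseteq> Cs" "finite \<Gamma>" for \<Gamma>
  proof -
    obtain J where J: "J \<subseteq> I" "finite J" "\<Gamma> = con aF ` J"
      using G unfolding Cs_def by (meson finite_subset_image)
    define M where "M = (\<Union>j\<in>J. cstrs j)"
    have fM: "finite M" unfolding M_def using J(2) by (auto intro!: finite_UN_I) (metis cstrs.simps finite.simps cidx.exhaust finite_insert)
    have MK: "M \<subseteq> K"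
    proof
      fix X assume "X \<in> M"
      then obtain j where "j \<in> J" "X \<in> cstrs j" unfolding M_def by blast
      thus "X \<in> K" using J(1) unfolding I_def by (cases j) auto
    qed
    obtain D where D: "D \<in> K" and emb: "\<forall>X\<in>M. \<exists>e. embedding aF e X D"
      using jep_fin[OF K fM MK] by blast
    obtain ld where u: "unif aF D ld" using unif_exists[OF K R D] by blast
    define eo where "eo = (\<lambda>X. SOME e. embedding aF e X D)"
    define \<tau> where "\<tau> = (\<lambda>X. if X \<in> K \<and> (\<exists>e. embedding aF e X D)
        then {(x,y). x \<in> scarrier X \<and> y \<in> scarrier X \<and> ld (eo X x) (eo X y)} else {})"
    have eoX: "embedding aF (eo X) X D" if "\<exists>e. embedding aF e X D" for X
      unfolding eo_def using that by (rule someI_ex)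
    have TWe: "TW \<tau> X = with_order X (\<lambda>x y. ld (eo X x) (eo X y))" if "X \<in> K" "\<exists>e. embedding aF e X D" for X
      unfolding TW_def \<tau>_def using that by (auto intro!: wo_cong)
    have tF: "\<forall>i. \<tau> i \<in> F i" unfolding \<tau>_def F_def by auto
    have "\<forall>c\<in>\<Gamma>. c \<tau>"
    proof
      fix c assume "c \<in> \<Gamma>"
      then obtain j where j: "j \<in> J" "c = con aF j" using J by blast
      show "c \<tau>"
      proof (cases j)
        case (CI B)
        have BM: "B \<in> M" using j CI unfolding M_def by force
        hence BK: "B \<in> K" using MK by blast
        have eB: "embedding aF (eo B) B D" using eoX emb BM by blast
        have wB: "wf_struc aR aF B" using K_wf[OF K BK] .
        let ?l = "\<lambda>x y. ld (eo B x) (eo B y)"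
        have "tord aF \<tau> B ?l"
          unfolding tord_def
        proof (intro conjI allI impI)
          show "strict_linear_order_on (scarrier B) ?l"
            using slo_pull[of "scarrier D" ld "eo B" "scarrier B"] u eB unfolding unif_def embedding_def by blast
          fix S assume cS: "closed_in aF B S"
          let ?X = "induced B S"
          have XK: "?X \<in> K" using in_K_ind[OF K BK cS] .
          have wX: "wf_struc aR aF ?X" using K_wf[OF K XK] .
          have e1: "embedding aF (eo B) ?X D" using emb_restrict[OF eB closed_sub[OF cS]] .
          hence ex: "\<exists>e. embedding aF e ?X D" by blast
          have "isomorphic aF (with_order ?X ?l) (with_order ?X (\<lambda>x y. ld (eo ?X x) (eo ?X y)))"
            using unif_pull[OF u wX e1 eoX[OF ex]] .
          thus "isomorphic aF (with_order ?X ?l) (TW \<tau> ?X)" using TWe[OF XK ex] by simp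
        qed
        thus ?thesis using j CI by auto
      next
        case (CP X Y)
        have XY: "X \<in> M" "Y \<in> M" using j CP unfolding M_def by force+
        hence XK: "X \<in> K" and YK: "Y \<in> K" using MK by blast+
        have ih: "isomorphic aF X Y" using j J(1) CP unfolding I_def by auto
        then obtain h where h: "isomorphism aF h X Y" unfolding isomorphic_def by blast
        have exX: "\<exists>e. embedding aF e X D" and exY: "\<exists>e. embedding aF e Y D" using emb XY by blast+
        have wX: "wf_struc aR aF X" using K_wf[OF K XK] .
        have e2: "embedding aF (eo Y \<circ> h) X D" using embedding_comp[OF iso_emb[OF h] eoX[OF exY]] .
        have m1: "isomorphic aF (with_order X (\<lambda>x y. ld (eo X x) (eo X y))) (with_order X (\<lambda>x y. ld ((eo Y \<circ> h) x) ((eo Y \<circ> h) y)))"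
          using unif_pull[OF u wX eoX[OF exX] e2] .
        have "isomorphism aF h (with_order X (\<lambda>x y. ld ((eo Y \<circ> h) x) ((eo Y \<circ> h) y))) (with_order Y (\<lambda>x y. ld (eo Y x) (eo Y y)))"
          using h by (simp add: iso_wo)
        hence m2: "isomorphic aF (with_order X (\<lambda>x y. ld ((eo Y \<circ> h) x) ((eo Y \<circ> h) y))) (with_order Y (\<lambda>x y. ld (eo Y x) (eo Y y)))"
          unfolding isomorphic_def by blast
        have "isomorphic aF (TW \<tau> X) (TW \<tau> Y)" using isomorphic_trans[OF m1 m2] TWe[OF XK exX] TWe[OF YK exY] by simp
        thus ?thesis using j CP by simp
      qed
    qed
    thus ?thesis using tF by blast
  qed
  obtain \<tau> where t: "\<forall>i. \<tau> i \<in> F i" "\<forall>c\<in>Cs. c \<tau>"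
    using compactness[of F Cs, OF finF supp sat] by blast
  have "\<forall>B\<in>K. \<exists>l. tord aF \<tau> B l"
  proof
    fix B assume "B \<in> K"
    hence "con aF (CI B) \<in> Cs" unfolding Cs_def I_def by blast
    thus "\<exists>l. tord aF \<tau> B l" using t(2) by fastforce
  qed
  moreover have "\<forall>X\<in>K. \<forall>Y\<in>K. isomorphic aF X Y \<longrightarrow> isomorphic aF (TW \<tau> X) (TW \<tau> Y)"
  proof (intro ballI impI)
    fix X Y assume "X \<in> K" "Y \<in> K" "isomorphic aF X Y"
    hence "con aF (CP X Y) \<in> Cs" unfolding Cs_def I_def by blast
    thus "isomorphic aF (TW \<tau> X) (TW \<tau> Y)" using t(2) by fastforce
  qed
  ultimately show ?thesis unfolding tau_ok_def by blast
qed

lemma slo_cong: "(\<And>x y. x \<in> X \<Longrightarrow> y \<in> X \<Longrightarrow> l1 x y = l2 x y) \<Longrightarrow> strict_linear_order_on X l1 = strict_linear_order_on X l2"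
proof -
  assume a: "\<And>x y. x \<in> X \<Longrightarrow> y \<in> X \<Longrightarrow> l1 x y = l2 x y"
  show ?thesis unfolding strict_linear_order_on_def using a by simp
qed

lemma tord_cong:
  assumes "\<And>x y. x \<in> scarrier B \<Longrightarrow> y \<in> scarrier B \<Longrightarrow> l1 x y = l2 x y"
  shows "tord aF \<tau> B l1 = tord aF \<tau> B l2"
proof -
  have "with_order (induced B S) l1 = with_order (induced B S) l2" if "closed_in aF B S" for S
    using closed_sub[OF that] assms by (intro wo_cong) auto
  moreover have "strict_linear_order_on (scarrier B) l1 = strict_linear_order_on (scarrier B) l2"
    using assms by (rule slo_cong)
  ultimately show ?thesis unfolding tord_def by auto
qed

definition Kst :: "('f \<Rightarrow> nat) \<Rightarrow> ('r, 'f) struc set \<Rightarrow> (('r, 'f) struc \<Rightarrow> (nat \<times> nat) set) \<Rightarrow> ('r option, 'f) struc set" where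
  "Kst aF K \<tau> = {W. reduct W \<in> K \<and> tord aF \<tau> (reduct W) (\<lambda>x y. srels W None [x,y]) \<and>
      W = with_order (reduct W) (\<lambda>x y. srels W None [x,y])}"

lemma mem_Kst: "with_order A lt \<in> Kst aF K \<tau> \<longleftrightarrow> A \<in> K \<and> tord aF \<tau> A lt"
proof -
  have e: "(\<lambda>x y. srels (with_order A lt) None [x,y]) = (\<lambda>x y. x \<in> scarrier A \<and> y \<in> scarrier A \<and> lt x y)"
    by simp
  have "with_order A (\<lambda>x y. x \<in> scarrier A \<and> y \<in> scarrier A \<and> lt x y) = with_order A lt" by (rule wo_cong) auto
  moreover have "tord aF \<tau> A (\<lambda>x y. x \<in> scarrier A \<and> y \<in> scarrier A \<and> lt x y) = tord aF \<tau> A lt" by (rule tord_cong) auto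
  ultimately show ?thesis unfolding Kst_def using e by simp
qed

lemma Kst_form: "W \<in> Kst aF K \<tau> \<Longrightarrow> \<exists>A lt. W = with_order A lt \<and> A \<in> K \<and> tord aF \<tau> A lt"
  unfolding Kst_def by blast

lemma tord_carrier:
  assumes w: "wf_struc aR aF B" and t: "tord aF \<tau> B l"
  shows "isomorphic aF (with_order B l) (TW \<tau> B)"
proof -
  have "isomorphic aF (with_order (induced B (scarrier B)) l) (TW \<tau> (induced B (scarrier B)))"
    using t closed_carrier[OF wf_fcl[OF w]] unfolding tord_def by blast
  thus ?thesis using ind_carrier[OF w] by simp
qed

lemma tord_unique:
  assumes w: "wf_struc aR aF B" and t1: "tord aF \<tau> B l1" and t2: "tord aF \<tau> B l2"
  shows "isomorphic aF (with_order B l1) (with_order B l2)"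
proof -
  have "isomorphic aF (TW \<tau> B) (with_order B l2)"
    using isomorphic_sym[OF tord_carrier[OF w t2]] wf_fcl[OF w] by simp
  thus ?thesis using isomorphic_trans[OF tord_carrier[OF w t1]] by blast
qed

lemma tord_pull:
  assumes K: "fraisse_class aR aF K" and ok: "tau_ok aF K \<tau>" and XK: "X \<in> K" and EK: "E \<in> K"
    and b: "embedding aF b X E" and tE: "tord aF \<tau> E le"
    and l: "\<And>x y. x \<in> scarrier X \<Longrightarrow> y \<in> scarrier X \<Longrightarrow> l x y = le (b x) (b y)"
  shows "tord aF \<tau> X l"
proof -
  have "tord aF \<tau> X (\<lambda>x y. le (b x) (b y))"
    unfolding tord_def
  proof (intro conjI allI impI)
    show "strict_linear_order_on (scarrier X) (\<lambda>x y. le (b x) (b y))"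
      using slo_pull[of "scarrier E" le b "scarrier X"] tE b unfolding tord_def embedding_def by blast
    fix S assume cS: "closed_in aF X S"
    have SX: "S \<subseteq> scarrier X" using closed_sub[OF cS] .
    have cbS: "closed_in aF E (b ` S)" using img_closed[OF b cS] .
    have m1: "isomorphic aF (with_order (induced X S) (\<lambda>x y. le (b x) (b y))) (with_order (induced E (b ` S)) le)"
      using order_img[OF b SX] .
    have m2: "isomorphic aF (with_order (induced E (b ` S)) le) (TW \<tau> (induced E (b ` S)))"
      using tE cbS unfolding tord_def by blast
    have XS: "induced X S \<in> K" using in_K_ind[OF K XK cS] .
    have ES: "induced E (b ` S) \<in> K" using in_K_ind[OF K EK cbS] .
    have "isomorphic aF (induced X S) (induced E (b ` S))" using img_iso[OF b SX] unfolding isomorphic_def by blast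
    hence "isomorphic aF (TW \<tau> (induced X S)) (TW \<tau> (induced E (b ` S)))" using ok XS ES unfolding tau_ok_def by blast
    hence m3: "isomorphic aF (TW \<tau> (induced E (b ` S))) (TW \<tau> (induced X S))"
      using isomorphic_sym fcl_induced[OF cS] unfolding TW_def by fastforce
    show "isomorphic aF (with_order (induced X S) (\<lambda>x y. le (b x) (b y))) (TW \<tau> (induced X S))"
      using isomorphic_trans[OF isomorphic_trans[OF m1 m2] m3] .
  qed
  thus ?thesis using tord_cong[of X l "\<lambda>x y. le (b x) (b y)"] l by simp
qed

lemma adjust:
  assumes K: "fraisse_class aR aF K" and ok: "tau_ok aF K \<tau>" and XK: "X \<in> K" and EK: "E \<in> K"
    and b: "embedding aF b X E" and tE: "tord aF \<tau> E le" and tX: "tord aF \<tau> X lx"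
  shows "\<exists>b'. embedding aF b' X E \<and> b' ` scarrier X = b ` scarrier X \<and>
     (\<forall>x\<in>scarrier X. \<forall>y\<in>scarrier X. le (b' x) (b' y) = lx x y)"
proof -
  have wX: "wf_struc aR aF X" using K_wf[OF K XK] .
  have tp: "tord aF \<tau> X (\<lambda>x y. le (b x) (b y))" using tord_pull[OF K ok XK EK b tE] by simp
  obtain \<beta> where be: "isomorphism aF \<beta> (with_order X lx) (with_order X (\<lambda>x y. le (b x) (b y)))"
    using tord_unique[OF wX tX tp] unfolding isomorphic_def by blast
  hence be1: "isomorphism aF \<beta> X X" and be2: "\<forall>x\<in>scarrier X. \<forall>y\<in>scarrier X. le (b (\<beta> x)) (b (\<beta> y)) = lx x y"
    by (simp_all add: iso_wo)
  have "embedding aF (b \<circ> \<beta>) X E" using embedding_comp[OF iso_emb[OF be1] b] .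
  moreover have "(b \<circ> \<beta>) ` scarrier X = b ` (\<beta> ` scarrier X)" by (simp only: image_comp)
  hence "(b \<circ> \<beta>) ` scarrier X = b ` scarrier X" using be1 unfolding isomorphism_def by simp
  ultimately show ?thesis using be2 by (intro exI[of _ "b \<circ> \<beta>"]) simp
qed

lemma rank_eq:
  assumes inj: "inj_on u A" and o: "\<And>x y. x \<in> A \<Longrightarrow> y \<in> A \<Longrightarrow> le (u x) (u y) = la x y" and x: "x \<in> A"
  shows "card {t\<in>u ` A. le t (u x)} = card {z\<in>A. la z x}"
proof -
  have "{t\<in>u ` A. le t (u x)} = u ` {z\<in>A. la z x}" using o x by auto
  moreover have "inj_on u {z\<in>A. la z x}" using inj by (rule inj_on_subset) auto
  ultimately show ?thesis by (simp add: card_image)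
qed

lemma rank_inj:
  assumes slo: "strict_linear_order_on A la" and fin: "finite A" and x: "x \<in> A" and y: "y \<in> A"
    and eq: "card {z\<in>A. la z x} = card {z\<in>A. la z y}"
  shows "x = y"
proof (rule ccontr)
  assume ne: "x \<noteq> y"
  have irr: "\<And>x. x \<in> A \<Longrightarrow> \<not> la x x" and tr: "\<And>x y z. x \<in> A \<Longrightarrow> y \<in> A \<Longrightarrow> z \<in> A \<Longrightarrow> la x y \<Longrightarrow> la y z \<Longrightarrow> la x z"
    and tot: "\<And>x y. x \<in> A \<Longrightarrow> y \<in> A \<Longrightarrow> x \<noteq> y \<Longrightarrow> la x y \<or> la y x"
    using slo unfolding strict_linear_order_on_def by blast+
  have lt: "card {z\<in>A. la z p} < card {z\<in>A. la z q}" if p: "p \<in> A" and q: "q \<in> A" and pq: "la p q" for p q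
  proof (rule psubset_card_mono)
    show "finite {z\<in>A. la z q}" using fin by simp
    show "{z\<in>A. la z p} \<subset> {z\<in>A. la z q}"
    proof
      show "{z\<in>A. la z p} \<subseteq> {z\<in>A. la z q}" using tr p q pq by blast
      show "{z\<in>A. la z p} \<noteq> {z\<in>A. la z q}" using irr p pq by blast
    qed
  qed
  from tot[OF x y ne] show False
  proof
    assume "la x y" thus False using lt[OF x y] eq by simp
  next
    assume "la y x" thus False using lt[OF y x] eq by simp
  qed
qed

lemma rigid:
  assumes slo: "strict_linear_order_on A la" and fin: "finite A"
    and iu: "inj_on u A" and iv: "inj_on v A" and im: "u ` A = v ` A"
    and ou: "\<And>x y. x \<in> A \<Longrightarrow> y \<in> A \<Longrightarrow> le (u x) (u y) = la x y"
    and ov: "\<And>x y. x \<in> A \<Longrightarrow> y \<in> A \<Longrightarrow> le (v x) (v y) = la x y"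
    and x: "x \<in> A"
  shows "u x = v x"
proof -
  have "v x \<in> u ` A" using im x by simp
  then obtain y where y: "y \<in> A" "v x = u y" by blast
  have "card {z\<in>A. la z x} = card {t\<in>v ` A. le t (v x)}" using rank_eq[where u=v and le=le and la=la, OF iv ov x] by simp
  also have "\<dots> = card {t\<in>u ` A. le t (u y)}" using im y by simp
  also have "\<dots> = card {z\<in>A. la z y}" using rank_eq[where u=u and le=le and la=la, OF iu ou y(1)] .
  finally have "x = y" using rank_inj[OF slo fin x y(1)] by blast
  thus ?thesis using y by simp
qed

lemma wf_reduct: "wf_struc (ord_arity aR) aF B \<Longrightarrow> wf_struc aR aF (reduct B)"
  unfolding wf_struc_def reduct_def ord_arity_def by auto

lemma reduct_simps[simp]: "scarrier (reduct B) = scarrier B" "sfuns (reduct B) = sfuns B"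
  "srels (reduct B) R = srels B (Some R)"
  by (simp_all add: reduct_def)

lemma emb_reduct:
  assumes e: "embedding aF h B (with_order A l)"
  shows "embedding aF h (reduct B) A"
proof -
  have i: "inj_on h (scarrier B)" and im: "h ` scarrier B \<subseteq> scarrier A"
    and r: "\<And>R xs. set xs \<subseteq> scarrier B \<Longrightarrow> srels (with_order A l) R (map h xs) = srels B R xs"
    and f: "\<And>f xs. length xs = aF f \<Longrightarrow> set xs \<subseteq> scarrier B \<Longrightarrow> h (sfuns B f xs) = sfuns A f (map h xs)"
    using e unfolding embedding_def by auto
  show ?thesis unfolding embedding_def
  proof (intro conjI allI impI)
    fix R xs assume "set xs \<subseteq> scarrier (reduct B)"
    thus "srels A R (map h xs) = srels (reduct B) R xs" using r[of xs "Some R"] by simp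
  qed (use i im f in auto)
qed

lemma wo_reduct_eq:
  assumes w: "wf_struc (ord_arity aR) aF B"
  shows "B = with_order (reduct B) (\<lambda>x y. srels B None [x,y])"
proof (rule struc.equality)
  have n: "srels B None xs = (\<exists>x y. xs = [x,y] \<and> x \<in> scarrier B \<and> y \<in> scarrier B \<and> srels B None [x,y])" for xs
  proof
    assume a: "srels B None xs"
    hence "length xs = 2" "set xs \<subseteq> scarrier B" using w unfolding wf_struc_def ord_arity_def by auto
    then obtain x y where "xs = [x,y]" by (auto simp: numeral_2_eq_2 length_Suc_conv)
    thus "\<exists>x y. xs = [x,y] \<and> x \<in> scarrier B \<and> y \<in> scarrier B \<and> srels B None [x,y]"
      using a \<open>set xs \<subseteq> scarrier B\<close> by auto
  qed auto
  show "srels B = srels (with_order (reduct B) (\<lambda>x y. srels B None [x,y]))"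
  proof (intro ext)
    fix R xs show "srels B R xs = srels (with_order (reduct B) (\<lambda>x y. srels B None [x,y])) R xs"
    proof (cases R)
      case None
      have "srels (with_order (reduct B) (\<lambda>x y. srels B None [x,y])) None xs =
        (\<exists>x y. xs = [x,y] \<and> x \<in> scarrier B \<and> y \<in> scarrier B \<and> srels B None [x,y])"
        by (simp add: with_order_def)
      thus ?thesis using n[of xs] None by simp
    qed (simp add: with_order_def)
  qed
qed (simp_all add: with_order_def)

context
  fixes aR :: "'r \<Rightarrow> nat" and aF :: "'f \<Rightarrow> nat" and K :: "('r, 'f) struc set" and \<tau>
  assumes K: "fraisse_class aR aF K" and ok: "tau_ok aF K \<tau>"
begin

lemma ex_tord: "B \<in> K \<Longrightarrow> \<exists>l. tord aF \<tau> B l"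
  using ok unfolding tau_ok_def by blast

lemma Kst_reduct: "reduct ` Kst aF K \<tau> = K"
proof
  show "reduct ` Kst aF K \<tau> \<subseteq> K" unfolding Kst_def by auto
  show "K \<subseteq> reduct ` Kst aF K \<tau>"
  proof
    fix A assume A: "A \<in> K"
    obtain l where "tord aF \<tau> A l" using ex_tord[OF A] by blast
    hence "with_order A l \<in> Kst aF K \<tau>" using A mem_Kst by blast
    thus "A \<in> reduct ` Kst aF K \<tau>" by (metis image_eqI reduct_wo)
  qed
qed

lemma Kst_ordered: "ordered_class (Kst aF K \<tau>)"
  unfolding ordered_class_def
proof
  fix W assume "W \<in> Kst aF K \<tau>"
  then obtain A lt where W: "W = with_order A lt" "A \<in> K" "tord aF \<tau> A lt" using Kst_form by blast
  have "strict_linear_order_on (scarrier A) lt" using W(3) unfolding tord_def by blast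
  moreover have "strict_linear_order_on (scarrier A) (\<lambda>x y. srels W None [x,y]) = strict_linear_order_on (scarrier A) lt"
    by (rule slo_cong) (simp add: W(1))
  ultimately show "strict_linear_order_on (scarrier W) (\<lambda>x y. srels W None [x, y])" using W(1) by simp
qed

lemma Kst_cof: "class_of_finite (ord_arity aR) aF (Kst aF K \<tau>)"
  unfolding class_of_finite_def
proof
  fix W assume "W \<in> Kst aF K \<tau>"
  then obtain A lt where W: "W = with_order A lt" "A \<in> K" "tord aF \<tau> A lt" using Kst_form by blast
  show "wf_struc (ord_arity aR) aF W \<and> finite (scarrier W)"
    using W wo_wf[OF K_wf[OF K W(2)]] K_fin[OF K W(2)] by simp
qed

lemma Kst_her: "hereditary (ord_arity aR) aF (Kst aF K \<tau>)"
  unfolding hereditary_def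
proof (intro ballI allI impI)
  fix W B h assume W: "W \<in> Kst aF K \<tau>" and a: "wf_struc (ord_arity aR) aF B \<and> finite (scarrier B) \<and> embedding aF h B W"
  obtain A lt where W': "W = with_order A lt" "A \<in> K" "tord aF \<tau> A lt" using Kst_form[OF W] by blast
  have e: "embedding aF h B (with_order A lt)" using a W' by simp
  have er: "embedding aF h (reduct B) A" by (rule emb_reduct[OF e])
  have wr: "wf_struc aR aF (reduct B)" using wf_reduct a by blast
  have her: "hereditary aR aF K" using K unfolding fraisse_class_def by blast
  have fr: "finite (scarrier (reduct B))" using a by simp
  have rK: "reduct B \<in> K" using her W'(2) wr fr er unfolding hereditary_def by blast
  have o: "srels B None [x,y] = lt (h x) (h y)" if "x \<in> scarrier B" "y \<in> scarrier B" for x y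
  proof -
    have rel: "\<forall>R xs. set xs \<subseteq> scarrier B \<longrightarrow> srels (with_order A lt) R (map h xs) = srels B R xs"
      using e unfolding embedding_def by blast
    have "set [x,y] \<subseteq> scarrier B" using that by simp
    with rel have "srels (with_order A lt) None (map h [x,y]) = srels B None [x,y]" by blast
    moreover have "h x \<in> scarrier A" "h y \<in> scarrier A" using er that unfolding embedding_def by auto
    ultimately show ?thesis by simp
  qed
  have "tord aF \<tau> (reduct B) (\<lambda>x y. srels B None [x,y])"
    by (rule tord_pull[OF K ok rK W'(2) er W'(3)]) (simp add: o)
  moreover have "B = with_order (reduct B) (\<lambda>x y. srels B None [x,y])" using wo_reduct_eq a by blast
  ultimately show "B \<in> Kst aF K \<tau>" unfolding Kst_def using rK by blast
qed

lemma Kst_jep: "joint_embedding aF (Kst aF K \<tau>)"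
  unfolding joint_embedding_def
proof (intro ballI)
  fix W1 W2 assume "W1 \<in> Kst aF K \<tau>" "W2 \<in> Kst aF K \<tau>"
  then obtain A1 l1 A2 l2 where W: "W1 = with_order A1 l1" "A1 \<in> K" "tord aF \<tau> A1 l1"
    "W2 = with_order A2 l2" "A2 \<in> K" "tord aF \<tau> A2 l2" using Kst_form by metis
  have "joint_embedding aF K" using K unfolding fraisse_class_def by blast
  then obtain D where D: "D \<in> K" and "\<exists>f. embedding aF f A1 D" "\<exists>g. embedding aF g A2 D"
    unfolding joint_embedding_def using W by blast
  then obtain f g where f: "embedding aF f A1 D" and g: "embedding aF g A2 D" by blast
  obtain ld where ld: "tord aF \<tau> D ld" using ex_tord[OF D] by blast
  obtain f' where f': "embedding aF f' A1 D" "\<forall>x\<in>scarrier A1. \<forall>y\<in>scarrier A1. ld (f' x) (f' y) = l1 x y"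
    using adjust[OF K ok W(2) D f ld W(3)] by blast
  obtain g' where g': "embedding aF g' A2 D" "\<forall>x\<in>scarrier A2. \<forall>y\<in>scarrier A2. ld (g' x) (g' y) = l2 x y"
    using adjust[OF K ok W(5) D g ld W(6)] by blast
  have "with_order D ld \<in> Kst aF K \<tau>" using D ld mem_Kst by blast
  moreover have "embedding aF f' W1 (with_order D ld)" using f' W(1) by (simp add: emb_wo)
  moreover have "embedding aF g' W2 (with_order D ld)" using g' W(4) by (simp add: emb_wo)
  ultimately show "\<exists>C\<in>Kst aF K \<tau>. (\<exists>f. embedding aF f W1 C) \<and> (\<exists>g. embedding aF g W2 C)" by blast
qed

lemma Kst_large: "arbitrarily_large (Kst aF K \<tau>)"
  unfolding arbitrarily_large_def
proof
  fix n
  obtain A where A: "A \<in> K" "n \<le> card (scarrier A)" using K unfolding fraisse_class_def arbitrarily_large_def by blast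
  obtain l where "tord aF \<tau> A l" using ex_tord[OF A(1)] by blast
  hence "with_order A l \<in> Kst aF K \<tau>" using A mem_Kst by blast
  thus "\<exists>A\<in>Kst aF K \<tau>. n \<le> card (scarrier A)" using A by (intro bexI[of _ "with_order A l"]) simp_all
qed

lemma Kst_forgetful: "forgetful aF (Kst aF K \<tau>)"
  unfolding forgetful_def Kst_reduct admissible_def
proof (intro ballI allI impI)
  fix A B ltA ltB assume A: "A \<in> K" and B: "B \<in> K" and
    a: "isomorphic aF A B \<and> with_order A ltA \<in> Kst aF K \<tau> \<and> with_order B ltB \<in> Kst aF K \<tau>"
  have tA: "tord aF \<tau> A ltA" and tB: "tord aF \<tau> B ltB" using a mem_Kst by blast+
  have wA: "wf_struc aR aF A" and wB: "wf_struc aR aF B" using K_wf[OF K] A B by blast+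
  have m1: "isomorphic aF (with_order A ltA) (TW \<tau> A)" using tord_carrier[OF wA tA] .
  have m2: "isomorphic aF (TW \<tau> A) (TW \<tau> B)" using ok A B a unfolding tau_ok_def by blast
  have m3: "isomorphic aF (TW \<tau> B) (with_order B ltB)"
    using isomorphic_sym[OF tord_carrier[OF wB tB]] wf_fcl[OF wB] by simp
  show "isomorphic aF (with_order A ltA) (with_order B ltB)"
    using isomorphic_trans[OF isomorphic_trans[OF m1 m2] m3] .
qed

end

lemma binom_self_img:
  assumes w: "wf_struc aR aF A" and h: "embedding aF h A Z"
  shows "h ` scarrier A \<in> binom aF Z A"
proof -
  have "closed_in aF Z (h ` scarrier A)" using img_closed[OF h closed_carrier[OF wf_fcl[OF w]]] .
  moreover have "isomorphism aF h A (induced Z (h ` scarrier A))" using img_iso[OF h subset_refl] ind_carrier[OF w] by simp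
  ultimately show ?thesis using binom_iff by blast
qed

context
  fixes aR :: "'r \<Rightarrow> nat" and aF :: "'f \<Rightarrow> nat" and K :: "('r, 'f) struc set" and \<tau>
  assumes K: "fraisse_class aR aF K" and ok: "tau_ok aF K \<tau>"
begin

lemma side:
  assumes AK: "A \<in> K" and ZK: "Z \<in> K" and EK: "E \<in> K"
    and tZ: "tord aF \<tau> Z lz" and tE: "tord aF \<tau> E le"
    and z0: "embedding aF z0 Z D" and d: "isomorphism aF d D (induced E D')" and cD: "closed_in aF E D'"
    and h: "embedding aF h A Z"
  shows "\<exists>z. embedding aF z Z E \<and> (\<forall>x\<in>scarrier Z. \<forall>y\<in>scarrier Z. le (z x) (z y) = lz x y) \<and>
      z ` (h ` scarrier A) \<in> binom aF (induced E D') A"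
proof -
  have DE: "D' \<subseteq> scarrier E" using closed_sub[OF cD] .
  have "embedding aF (id \<circ> d) D E" by (rule embedding_comp[OF iso_emb[OF d] emb_incl[OF DE]])
  hence ed: "embedding aF d D E" by simp
  have z1: "embedding aF (d \<circ> z0) Z E" by (rule embedding_comp[OF z0 ed])
  obtain z where z: "embedding aF z Z E" "z ` scarrier Z = (d \<circ> z0) ` scarrier Z"
     "\<forall>x\<in>scarrier Z. \<forall>y\<in>scarrier Z. le (z x) (z y) = lz x y"
    using adjust[OF K ok ZK EK z1 tE tZ] by blast
  have "(d \<circ> z0) ` scarrier Z = d ` (z0 ` scarrier Z)" by (simp only: image_comp)
  moreover have "z0 ` scarrier Z \<subseteq> scarrier D" using z0 unfolding embedding_def by blast
  moreover have "d ` scarrier D = D'" using d unfolding isomorphism_def by simp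
  ultimately have zD: "z ` scarrier Z \<subseteq> D'" using z(2) by blast
  have ezi: "embedding aF z Z (induced E D')" by (rule emb_into_induced[OF z(1) zD])
  have "h ` scarrier A \<in> binom aF Z A" using binom_self_img[OF K_wf[OF K AK] h] .
  hence "z ` (h ` scarrier A) \<in> binom aF (induced E D') A" by (rule binom_img[OF ezi])
  thus ?thesis using z by blast
qed

lemma Kst_ap:
  assumes R: "ramsey_class aF K"
  shows "amalgamation aF (Kst aF K \<tau>)"
  unfolding amalgamation_def
proof (intro ballI allI impI)
  fix A' B' C' f g
  assume A': "A' \<in> Kst aF K \<tau>" and B': "B' \<in> Kst aF K \<tau>" and C': "C' \<in> Kst aF K \<tau>"
    and fg: "embedding aF f A' B' \<and> embedding aF g A' C'"
  obtain A la where A: "A' = with_order A la" "A \<in> K" "tord aF \<tau> A la" using Kst_form[OF A'] by blast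
  obtain B lb where B: "B' = with_order B lb" "B \<in> K" "tord aF \<tau> B lb" using Kst_form[OF B'] by blast
  obtain C lc where C: "C' = with_order C lc" "C \<in> K" "tord aF \<tau> C lc" using Kst_form[OF C'] by blast
  have f: "embedding aF f A B" and fo: "\<forall>x\<in>scarrier A. \<forall>y\<in>scarrier A. lb (f x) (f y) = la x y"
    using fg A(1) B(1) by (simp_all add: emb_wo)
  have g: "embedding aF g A C" and go: "\<forall>x\<in>scarrier A. \<forall>y\<in>scarrier A. lc (g x) (g y) = la x y"
    using fg A(1) C(1) by (simp_all add: emb_wo)
  have "joint_embedding aF K" using K unfolding fraisse_class_def by blast
  then obtain D where D: "D \<in> K" and "\<exists>f. embedding aF f B D" "\<exists>g. embedding aF g C D"
    unfolding joint_embedding_def using B(2) C(2) by blast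
  then obtain b0 c0 where b0: "embedding aF b0 B D" and c0: "embedding aF c0 C D" by blast
  have RR: "\<forall>A\<in>K. \<forall>B\<in>K. \<forall>k::nat. k \<ge> 2 \<longrightarrow>
        (\<exists>C\<in>K. \<forall>\<chi>::nat set \<Rightarrow> nat. \<chi> ` binom aF C A \<subseteq> {..<k} \<longrightarrow>
           (\<exists>B'\<in>binom aF C B. \<exists>c. \<forall>S\<in>binom aF (induced C B') A. \<chi> S = c))"
    using R unfolding ramsey_class_def .
  have k2: "(2::nat) \<le> 2" by simp
  from RR[rule_format, OF A(2) D k2] obtain E where E: "E \<in> K" and RE: "\<And>\<chi>::nat set \<Rightarrow> nat. \<chi> ` binom aF E A \<subseteq> {..<2} \<Longrightarrow>
           (\<exists>B'\<in>binom aF E D. \<exists>c. \<forall>S\<in>binom aF (induced E B') A. \<chi> S = c)"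
    by blast
  obtain le where le: "tord aF \<tau> E le" using ex_tord[OF K ok E] by blast
  define red where "red = (\<lambda>S. \<exists>b. embedding aF b B E \<and> (\<forall>x\<in>scarrier B. \<forall>y\<in>scarrier B. le (b x) (b y) = lb x y)
      \<and> b ` (f ` scarrier A) = S)"
  define \<chi> where "\<chi> = (\<lambda>S. if red S then 1 else (0::nat))"
  have "\<chi> ` binom aF E A \<subseteq> {..<2}" unfolding \<chi>_def by auto
  hence "\<exists>B'\<in>binom aF E D. \<exists>c. \<forall>S\<in>binom aF (induced E B') A. \<chi> S = c" by (rule RE)
  then obtain D' where D': "D' \<in> binom aF E D" and exc: "\<exists>c. \<forall>S\<in>binom aF (induced E D') A. \<chi> S = c"
    by (rule bexE)
  from exc obtain c where mono: "\<forall>S\<in>binom aF (induced E D') A. \<chi> S = c" by (rule exE)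
  have cD: "closed_in aF E D'" using D' binom_iff by blast
  obtain d where d: "isomorphism aF d D (induced E D')" using D' binom_iff by blast
  obtain b where b: "embedding aF b B E" "\<forall>x\<in>scarrier B. \<forall>y\<in>scarrier B. le (b x) (b y) = lb x y"
      "b ` (f ` scarrier A) \<in> binom aF (induced E D') A"
    using side[OF A(2) B(2) E B(3) le b0 d cD f] by blast
  obtain cc where cc: "embedding aF cc C E" "\<forall>x\<in>scarrier C. \<forall>y\<in>scarrier C. le (cc x) (cc y) = lc x y"
      "cc ` (g ` scarrier A) \<in> binom aF (induced E D') A"
    using side[OF A(2) C(2) E C(3) le c0 d cD g] by blast
  have "red (b ` (f ` scarrier A))" unfolding red_def using b by blast
  hence "c = 1" using mono b(3) unfolding \<chi>_def by force
  hence "\<chi> (cc ` (g ` scarrier A)) = 1" using mono cc(3) by blast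
  hence "red (cc ` (g ` scarrier A))" unfolding \<chi>_def by (cases "red (cc ` (g ` scarrier A))") auto
  then obtain b' where b': "embedding aF b' B E" "\<forall>x\<in>scarrier B. \<forall>y\<in>scarrier B. le (b' x) (b' y) = lb x y"
      "b' ` (f ` scarrier A) = cc ` (g ` scarrier A)"
    unfolding red_def by blast
  have slo: "strict_linear_order_on (scarrier A) la" using A(3) unfolding tord_def by blast
  have finA: "finite (scarrier A)" using K_fin[OF K A(2)] .
  have u: "embedding aF (b' \<circ> f) A E" by (rule embedding_comp[OF f b'(1)])
  have v: "embedding aF (cc \<circ> g) A E" by (rule embedding_comp[OF g cc(1)])
  have fA: "f ` scarrier A \<subseteq> scarrier B" using f unfolding embedding_def by blast
  have gA: "g ` scarrier A \<subseteq> scarrier C" using g unfolding embedding_def by blast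
  have comp: "\<forall>x\<in>scarrier A. b' (f x) = cc (g x)"
  proof
    fix x assume x: "x \<in> scarrier A"
    have "(b' \<circ> f) x = (cc \<circ> g) x"
    proof (rule rigid[where u="b' \<circ> f" and v="cc \<circ> g" and le=le, OF slo finA])
      show "inj_on (b' \<circ> f) (scarrier A)" using u unfolding embedding_def by blast
      show "inj_on (cc \<circ> g) (scarrier A)" using v unfolding embedding_def by blast
      show "(b' \<circ> f) ` scarrier A = (cc \<circ> g) ` scarrier A" using b'(3) by (simp add: image_comp)
      fix p q assume p: "p \<in> scarrier A" and q: "q \<in> scarrier A"
      have "f p \<in> scarrier B" "f q \<in> scarrier B" using fA p q by auto
      thus "le ((b' \<circ> f) p) ((b' \<circ> f) q) = la p q" using b'(2) fo p q by simp
      have "g p \<in> scarrier C" "g q \<in> scarrier C" using gA p q by auto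
      thus "le ((cc \<circ> g) p) ((cc \<circ> g) q) = la p q" using cc(2) go p q by simp
    qed (rule x)
    thus "b' (f x) = cc (g x)" by simp
  qed
  have "with_order E le \<in> Kst aF K \<tau>" using E le mem_Kst by blast
  moreover have "embedding aF b' B' (with_order E le)" using b' B(1) by (simp add: emb_wo)
  moreover have "embedding aF cc C' (with_order E le)" using cc C(1) by (simp add: emb_wo)
  moreover have "\<forall>x\<in>scarrier A'. b' (f x) = cc (g x)" using comp A(1) by simp
  ultimately show "\<exists>D\<in>Kst aF K \<tau>. \<exists>f' g'. embedding aF f' B' D \<and> embedding aF g' C' D \<and>
            (\<forall>x\<in>scarrier A'. f' (f x) = g' (g x))" by blast
qed

end

context
  fixes aR :: "'r \<Rightarrow> nat" and aF :: "'f \<Rightarrow> nat" and K :: "('r, 'f) struc set" and \<tau>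
  assumes K: "fraisse_class aR aF K" and ok: "tau_ok aF K \<tau>"
begin

lemma amalg_many:
  assumes AK: "A \<in> K" and BK: "B \<in> K" and a: "embedding aF a A B" and fin: "finite \<Sigma>"
  shows "\<Sigma> \<subseteq> {\<sigma>. embedding aF \<sigma> A A} \<Longrightarrow> \<exists>D\<in>K. \<exists>p0. embedding aF p0 B D \<and>
     (\<forall>\<sigma>\<in>\<Sigma>. \<exists>p. embedding aF p B D \<and> (\<forall>x\<in>scarrier A. p (a x) = p0 (a (\<sigma> x))))"
  using fin
proof (induction \<Sigma> rule: finite_induct)
  case empty
  show ?case using BK embedding_id by blast
next
  case (insert \<sigma> \<Sigma>)
  have s: "embedding aF \<sigma> A A" using insert.prems by blast
  obtain D p0 where D: "D \<in> K" and p0: "embedding aF p0 B D"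
    and H: "\<forall>\<sigma>\<in>\<Sigma>. \<exists>p. embedding aF p B D \<and> (\<forall>x\<in>scarrier A. p (a x) = p0 (a (\<sigma> x)))"
    using insert.IH insert.prems by blast
  have e: "embedding aF (p0 \<circ> (a \<circ> \<sigma>)) A D" using embedding_comp[OF embedding_comp[OF s a] p0] .
  have "amalgamation aF K" using K unfolding fraisse_class_def by blast
  then obtain D' u v where D': "D' \<in> K" and u: "embedding aF u D D'" and v: "embedding aF v B D'"
    and uv: "\<forall>x\<in>scarrier A. u ((p0 \<circ> (a \<circ> \<sigma>)) x) = v (a x)"
    unfolding amalgamation_def using AK D BK e a by blast
  have "embedding aF (u \<circ> p0) B D'" using embedding_comp[OF p0 u] .
  moreover have "\<forall>\<sigma>'\<in>insert \<sigma> \<Sigma>. \<exists>p. embedding aF p B D' \<and> (\<forall>x\<in>scarrier A. p (a x) = (u \<circ> p0) (a (\<sigma>' x)))"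
  proof
    fix \<sigma>' assume "\<sigma>' \<in> insert \<sigma> \<Sigma>"
    thus "\<exists>p. embedding aF p B D' \<and> (\<forall>x\<in>scarrier A. p (a x) = (u \<circ> p0) (a (\<sigma>' x)))"
    proof
      assume "\<sigma>' = \<sigma>" thus ?thesis using v uv by auto
    next
      assume "\<sigma>' \<in> \<Sigma>"
      then obtain p where p: "embedding aF p B D" "\<forall>x\<in>scarrier A. p (a x) = p0 (a (\<sigma>' x))" using H by blast
      have "embedding aF (u \<circ> p) B D'" using embedding_comp[OF p(1) u] .
      thus ?thesis using p(2) by auto
    qed
  qed
  ultimately show ?case using D' by blast
qed

lemma Kst_reasonable: "reasonable aF (Kst aF K \<tau>)"
  unfolding reasonable_def Kst_reduct[OF K ok] admissible_def
proof (intro ballI allI impI)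
  fix A B a ltA assume AK: "A \<in> K" and BK: "B \<in> K" and aa: "embedding aF a A B \<and> with_order A ltA \<in> Kst aF K \<tau>"
  have a: "embedding aF a A B" using aa by blast
  have tA: "tord aF \<tau> A ltA" using aa mem_Kst by blast
  have wA: "wf_struc aR aF A" using K_wf[OF K AK] .
  define Ords where "Ords = {R \<in> Pow (scarrier A \<times> scarrier A). tord aF \<tau> A (\<lambda>x y. (x,y) \<in> R)}"
  define sig where "sig = (\<lambda>R. SOME \<sigma>. isomorphism aF \<sigma> (with_order A ltA) (with_order A (\<lambda>x y. (x,y) \<in> R)))"
  have sigR: "isomorphism aF (sig R) (with_order A ltA) (with_order A (\<lambda>x y. (x,y) \<in> R))" if "R \<in> Ords" for R
  proof -
    have "tord aF \<tau> A (\<lambda>x y. (x,y) \<in> R)" using that Ords_def by blast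
    hence "\<exists>\<sigma>. isomorphism aF \<sigma> (with_order A ltA) (with_order A (\<lambda>x y. (x,y) \<in> R))"
      using tord_unique[OF wA tA] unfolding isomorphic_def by blast
    thus ?thesis unfolding sig_def by (rule someI_ex)
  qed
  have finO: "finite Ords" unfolding Ords_def using K_fin[OF K AK] by simp
  have "sig ` Ords \<subseteq> {\<sigma>. embedding aF \<sigma> A A}"
  proof
    fix s assume "s \<in> sig ` Ords"
    then obtain R where R: "R \<in> Ords" "s = sig R" by blast
    have "isomorphism aF (sig R) A A" using sigR[OF R(1)] by (simp add: iso_wo)
    thus "s \<in> {\<sigma>. embedding aF \<sigma> A A}" using R(2) iso_emb by blast
  qed
  then obtain D p0 where D: "D \<in> K" and p0: "embedding aF p0 B D"
    and H: "\<forall>\<sigma>\<in>sig ` Ords. \<exists>p. embedding aF p B D \<and> (\<forall>x\<in>scarrier A. p (a x) = p0 (a (\<sigma> x)))"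
    using amalg_many[OF AK BK a finite_imageI[OF finO]] by blast
  obtain ld where ld: "tord aF \<tau> D ld" using ex_tord[OF K ok D] by blast
  define O0 where "O0 = {(x,y). x \<in> scarrier A \<and> y \<in> scarrier A \<and> ld (p0 (a x)) (p0 (a y))}"
  have pa: "embedding aF (p0 \<circ> a) A D" using embedding_comp[OF a p0] .
  have "tord aF \<tau> A (\<lambda>x y. (x,y) \<in> O0)"
    by (rule tord_pull[OF K ok AK D pa ld]) (simp add: O0_def)
  hence O0O: "O0 \<in> Ords" unfolding Ords_def O0_def by auto
  let ?s = "sig O0"
  have si: "isomorphism aF ?s (with_order A ltA) (with_order A (\<lambda>x y. (x,y) \<in> O0))" using sigR[OF O0O] .
  hence si1: "isomorphism aF ?s A A" and si2: "\<forall>x\<in>scarrier A. \<forall>y\<in>scarrier A. ((?s x, ?s y) \<in> O0) = ltA x y"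
    by (simp_all add: iso_wo)
  have sA: "\<And>x. x \<in> scarrier A \<Longrightarrow> ?s x \<in> scarrier A" using si1 unfolding isomorphism_def embedding_def by blast
  obtain p where p: "embedding aF p B D" "\<forall>x\<in>scarrier A. p (a x) = p0 (a (?s x))" using H O0O by blast
  have tB: "tord aF \<tau> B (\<lambda>x y. ld (p x) (p y))"
    by (rule tord_pull[OF K ok BK D p(1) ld]) simp
  have "with_order B (\<lambda>x y. ld (p x) (p y)) \<in> Kst aF K \<tau>" using BK tB mem_Kst by blast
  moreover have "embedding aF a (with_order A ltA) (with_order B (\<lambda>x y. ld (p x) (p y)))"
  proof -
    have "\<forall>x\<in>scarrier A. \<forall>y\<in>scarrier A. ld (p (a x)) (p (a y)) = ltA x y"
    proof (intro ballI)
      fix x y assume x: "x \<in> scarrier A" and y: "y \<in> scarrier A"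
      have "ld (p (a x)) (p (a y)) = ld (p0 (a (?s x))) (p0 (a (?s y)))" using p(2) x y by simp
      also have "\<dots> = ((?s x, ?s y) \<in> O0)" using sA[OF x] sA[OF y] unfolding O0_def by simp
      also have "\<dots> = ltA x y" using si2 x y by blast
      finally show "ld (p (a x)) (p (a y)) = ltA x y" .
    qed
    thus ?thesis using a by (simp add: emb_wo)
  qed
  ultimately show "\<exists>ltB. with_order B ltB \<in> Kst aF K \<tau> \<and> embedding aF a (with_order A ltA) (with_order B ltB)"
    by blast
qed

end

theorem mainTheorem15:
  fixes aR :: "'r \<Rightarrow> nat" and aF :: "'f \<Rightarrow> nat" and K :: "('r, 'f) struc set"
  assumes "fraisse_class aR aF K" and "ramsey_class aF K"
  shows "\<exists>Ks :: ('r option, 'f) struc set.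
           fraisse_class (ord_arity aR) aF Ks \<and> ordered_class Ks \<and> reduct ` Ks = K \<and>
           reasonable aF Ks \<and> forgetful aF Ks"
proof -
  obtain \<tau> where ok: "tau_ok aF K \<tau>" using tau_exists[OF assms] by blast
  note K = assms(1)
  have "fraisse_class (ord_arity aR) aF (Kst aF K \<tau>)"
    unfolding fraisse_class_def
    using Kst_cof[OF K ok] Kst_her[OF K ok] Kst_jep[OF K ok] Kst_ap[OF K ok assms(2)] Kst_large[OF K ok]
    by blast
  thus ?thesis
    using Kst_ordered[OF K ok] Kst_reduct[OF K ok] Kst_reasonable[OF K ok] Kst_forgetful[OF K ok] by blast
qed

end
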